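(* Let $R$ be a commutative noetherian ring, $\mathfrak{a}$ an ideal contained in the Jacobson radical of $R$, and $M$ a finitely generated $R$-module. Then the map $\operatorname{Hom}_R(\widehat{R}^{\mathfrak{a}},C_{\mathfrak{a}}(M))\to\operatorname{Hom}_R(\widehat{R}^{\mathfrak{a}},M)$ induced by the inclusion $C_{\mathfrak{a}}(M)\hookrightarrow M$ is bijective.
   Context: $\widehat{R}^{\mathfrak{a}}$ is the $\mathfrak{a}$-adic completion of $R$. A module $N$ is $\mathfrak{a}$-adically complete if $N\to\varprojlim_n N/\mathfrak{a}^nN$ is an isomorphism. $C_{\mathfrak{a}}(M)$ denotes the unique maximal $\mathfrak{a}$-adically complete $R$-submodule of the finitely generated module $M$ (such a submodule exists and is unique). *)

theory Defs
  imports "HOL-Algebra.Module" "HOL-Algebra.Ideal_Product" "HOL-Algebra.Ring_Divisibility"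
    "HOL-Library.FuncSet"
begin

primrec ideal_power :: "('a, 'c) ring_scheme \<Rightarrow> 'a set \<Rightarrow> nat \<Rightarrow> 'a set" where
  "ideal_power R I 0 = carrier R"
| "ideal_power R I (Suc n) = ideal_prod R (ideal_power R I n) I"

definition jacobson_radical :: "('a, 'c) ring_scheme \<Rightarrow> 'a set" where
  "jacobson_radical R = carrier R \<inter> \<Inter>{P. maximalideal P R}"

definition mod_span :: "('a, 'c) ring_scheme \<Rightarrow> ('a, 'm) module \<Rightarrow> 'm set \<Rightarrow> 'm set" where
  "mod_span R M S = \<Inter>{N. submodule N R M \<and> S \<subseteq> N}"

definition fin_gen_module :: "('a, 'c) ring_scheme \<Rightarrow> ('a, 'm) module \<Rightarrow> bool" where
  "fin_gen_module R M \<longleftrightarrow> (\<exists>S. S \<subseteq> carrier M \<and> finite S \<and> mod_span R M S = carrier M)"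

definition ideal_smult :: "('a, 'c) ring_scheme \<Rightarrow> ('a, 'm) module \<Rightarrow> 'a set \<Rightarrow> 'm set \<Rightarrow> 'm set" where
  "ideal_smult R M J N = mod_span R M {r \<odot>\<^bsub>M\<^esub> x | r x. r \<in> J \<and> x \<in> N}"

definition mcoset :: "('a, 'm) module \<Rightarrow> 'm set \<Rightarrow> 'm \<Rightarrow> 'm set" where
  "mcoset M K x = (\<lambda>y. x \<oplus>\<^bsub>M\<^esub> y) ` K"

text \<open>The inverse limit lim_n N / I^n N, realised as compatible sequences of cosets
  (the transition map N/I^(n+1)N \<rightarrow> N/I^nN sends a coset to the coset containing it).\<close>
definition adic_invlim :: "('a, 'c) ring_scheme \<Rightarrow> ('a, 'm) module \<Rightarrow> 'a set \<Rightarrow> 'm set \<Rightarrow> (nat \<Rightarrow> 'm set) set" where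
  "adic_invlim R M I N =
     {c. (\<forall>n. \<exists>x\<in>N. c n = mcoset M (ideal_smult R M (ideal_power R I n) N) x) \<and>
         (\<forall>n. c (Suc n) \<subseteq> c n)}"

definition adic_canon :: "('a, 'c) ring_scheme \<Rightarrow> ('a, 'm) module \<Rightarrow> 'a set \<Rightarrow> 'm set \<Rightarrow> 'm \<Rightarrow> (nat \<Rightarrow> 'm set)" where
  "adic_canon R M I N x = (\<lambda>n. mcoset M (ideal_smult R M (ideal_power R I n) N) x)"

text \<open>A submodule N of M is I-adically complete if N \<rightarrow> lim_n N/I^nN is an isomorphism
  (it is always a homomorphism; isomorphism = bijective).\<close>
definition adically_complete :: "('a, 'c) ring_scheme \<Rightarrow> ('a, 'm) module \<Rightarrow> 'a set \<Rightarrow> 'm set \<Rightarrow> bool" where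
  "adically_complete R M I N \<longleftrightarrow> bij_betw (adic_canon R M I N) N (adic_invlim R M I N)"

definition max_complete_submodule :: "('a, 'c) ring_scheme \<Rightarrow> ('a, 'm) module \<Rightarrow> 'a set \<Rightarrow> 'm set" where
  "max_complete_submodule R M I =
     (THE N. submodule N R M \<and> adically_complete R M I N \<and>
        (\<forall>N'. submodule N' R M \<and> adically_complete R M I N' \<and> N \<subseteq> N' \<longrightarrow> N' = N))"

definition ring_module :: "('a, 'c) ring_scheme \<Rightarrow> ('a, 'a) module" where
  "ring_module R = \<lparr>carrier = carrier R, monoid.mult = monoid.mult R, one = one R, ring.zero = zero R,
                     ring.add = add R, module.smult = monoid.mult R\<rparr>"

definition adic_completion :: "('a, 'c) ring_scheme \<Rightarrow> ('a, 'm) module \<Rightarrow> 'a set \<Rightarrow> ('a, nat \<Rightarrow> 'm set) module" where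
  "adic_completion R M I =
    (let K = (\<lambda>n. ideal_smult R M (ideal_power R I n) (carrier M)) in
     \<lparr>carrier = adic_invlim R M I (carrier M),
      monoid.mult = (\<lambda>c d n. K n), one = K, ring.zero = K,
      ring.add = (\<lambda>c d n. {x \<oplus>\<^bsub>M\<^esub> y | x y. x \<in> c n \<and> y \<in> d n}),
      module.smult = (\<lambda>r c n. {(r \<odot>\<^bsub>M\<^esub> x) \<oplus>\<^bsub>M\<^esub> y | x y. x \<in> c n \<and> y \<in> K n})\<rparr>)"

definition ring_completion :: "('a, 'c) ring_scheme \<Rightarrow> 'a set \<Rightarrow> ('a, nat \<Rightarrow> 'a set) module" where
  "ring_completion R I = adic_completion R (ring_module R) I"

definition module_Hom :: "('a, 'c) ring_scheme \<Rightarrow> ('a, 'x) module \<Rightarrow> ('a, 'y) module \<Rightarrow> ('x \<Rightarrow> 'y) set" where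
  "module_Hom R A B =
     {f. f \<in> carrier A \<rightarrow>\<^sub>E carrier B \<and>
         (\<forall>x\<in>carrier A. \<forall>y\<in>carrier A. f (x \<oplus>\<^bsub>A\<^esub> y) = f x \<oplus>\<^bsub>B\<^esub> f y) \<and>
         (\<forall>r\<in>carrier R. \<forall>x\<in>carrier A. f (r \<odot>\<^bsub>A\<^esub> x) = r \<odot>\<^bsub>B\<^esub> f x)}"

end

theory Submission
  imports Defs
begin

locale fmod = module R M for R :: "('a, 'b) ring_scheme" (structure) and M :: "('a, 'm) module"

context fmod begin

lemma submodule_iff:
  "submodule P R M \<longleftrightarrow> P \<subseteq> carrier M \<and> \<zero>\<^bsub>M\<^esub> \<in> P \<and> (\<forall>x\<in>P. \<forall>y\<in>P. x \<oplus>\<^bsub>M\<^esub> y \<in> P)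
     \<and> (\<forall>r\<in>carrier R. \<forall>x\<in>P. r \<odot>\<^bsub>M\<^esub> x \<in> P)"
proof
  assume A: "submodule P R M"
  then obtain x where x: "x \<in> P" using submoduleE(2) by blast
  have "x \<oplus>\<^bsub>M\<^esub> \<ominus>\<^bsub>M\<^esub> x \<in> P" using submoduleE[OF A] x by blast
  moreover have "x \<oplus>\<^bsub>M\<^esub> \<ominus>\<^bsub>M\<^esub> x = \<zero>\<^bsub>M\<^esub>" using x submoduleE(1)[OF A] M.r_neg by auto
  ultimately show "P \<subseteq> carrier M \<and> \<zero>\<^bsub>M\<^esub> \<in> P \<and> (\<forall>x\<in>P. \<forall>y\<in>P. x \<oplus>\<^bsub>M\<^esub> y \<in> P)
     \<and> (\<forall>r\<in>carrier R. \<forall>x\<in>P. r \<odot>\<^bsub>M\<^esub> x \<in> P)" using submoduleE[OF A] by auto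
next
  assume A: "P \<subseteq> carrier M \<and> \<zero>\<^bsub>M\<^esub> \<in> P \<and> (\<forall>x\<in>P. \<forall>y\<in>P. x \<oplus>\<^bsub>M\<^esub> y \<in> P)
     \<and> (\<forall>r\<in>carrier R. \<forall>x\<in>P. r \<odot>\<^bsub>M\<^esub> x \<in> P)"
  show "submodule P R M"
  proof (rule submoduleI)
    fix a assume a: "a \<in> P"
    have "(\<ominus> \<one>) \<odot>\<^bsub>M\<^esub> a = \<ominus>\<^bsub>M\<^esub> a" using smult_l_minus[of \<one> a] a A by auto
    moreover have "(\<ominus> \<one>) \<odot>\<^bsub>M\<^esub> a \<in> P" using A a by auto
    ultimately show "\<ominus>\<^bsub>M\<^esub> a \<in> P" by simp
  qed (use A in auto)
qed

lemma submoduleD: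
  assumes "submodule P R M"
  shows "P \<subseteq> carrier M" "\<zero>\<^bsub>M\<^esub> \<in> P" "\<And>x y. x \<in> P \<Longrightarrow> y \<in> P \<Longrightarrow> x \<oplus>\<^bsub>M\<^esub> y \<in> P"
    "\<And>r x. r \<in> carrier R \<Longrightarrow> x \<in> P \<Longrightarrow> r \<odot>\<^bsub>M\<^esub> x \<in> P"
    "\<And>x. x \<in> P \<Longrightarrow> \<ominus>\<^bsub>M\<^esub> x \<in> P"
    "\<And>x y. x \<in> P \<Longrightarrow> y \<in> P \<Longrightarrow> x \<ominus>\<^bsub>M\<^esub> y \<in> P"
  using assms submodule_iff[of P] submoduleE(3)[OF assms] unfolding a_minus_def by auto

lemma submoduleI2:
  assumes "P \<subseteq> carrier M" "\<zero>\<^bsub>M\<^esub> \<in> P" "\<And>x y. x \<in> P \<Longrightarrow> y \<in> P \<Longrightarrow> x \<oplus>\<^bsub>M\<^esub> y \<in> P"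
    "\<And>r x. r \<in> carrier R \<Longrightarrow> x \<in> P \<Longrightarrow> r \<odot>\<^bsub>M\<^esub> x \<in> P"
  shows "submodule P R M"
  using assms submodule_iff[of P] by auto

lemma span_submodule:
  assumes "S \<subseteq> carrier M"
  shows "submodule (mod_span R M S) R M"
proof (rule submoduleI2)
  have c: "carrier M \<in> {N. submodule N R M \<and> S \<subseteq> N}" using carrier_is_submodule assms by auto
  show "mod_span R M S \<subseteq> carrier M" unfolding mod_span_def using c by auto
  show "\<zero>\<^bsub>M\<^esub> \<in> mod_span R M S" unfolding mod_span_def using submoduleD(2) by auto
  show "x \<oplus>\<^bsub>M\<^esub> y \<in> mod_span R M S" if "x \<in> mod_span R M S" "y \<in> mod_span R M S" for x y
    using that submoduleD(3) unfolding mod_span_def by auto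
  show "r \<odot>\<^bsub>M\<^esub> x \<in> mod_span R M S" if "r \<in> carrier R" "x \<in> mod_span R M S" for r x
    using that submoduleD(4) unfolding mod_span_def by auto
qed

lemma span_incl: "S \<subseteq> mod_span R M S"
  unfolding mod_span_def by auto

lemma span_min: "submodule N R M \<Longrightarrow> S \<subseteq> N \<Longrightarrow> mod_span R M S \<subseteq> N"
  unfolding mod_span_def by auto

lemma span_mono: "S \<subseteq> T \<Longrightarrow> T \<subseteq> carrier M \<Longrightarrow> mod_span R M S \<subseteq> mod_span R M T"
  using span_min[OF span_submodule[of T]] span_incl[of T] by auto

lemma span_of_submodule: "submodule N R M \<Longrightarrow> mod_span R M N = N"
  using span_min[of N N] span_incl[of N] by auto

lemma ism_submodule:
  assumes "J \<subseteq> carrier R" "P \<subseteq> carrier M"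
  shows "submodule (ideal_smult R M J P) R M"
proof -
  have "{r \<odot>\<^bsub>M\<^esub> x | r x. r \<in> J \<and> x \<in> P} \<subseteq> carrier M"
    using assms by (auto intro!: smult_closed)
  then show ?thesis unfolding ideal_smult_def by (rule span_submodule)
qed

lemma ism_gen: "r \<in> J \<Longrightarrow> x \<in> P \<Longrightarrow> r \<odot>\<^bsub>M\<^esub> x \<in> ideal_smult R M J P"
proof -
  assume "r \<in> J" "x \<in> P"
  then have "r \<odot>\<^bsub>M\<^esub> x \<in> {r \<odot>\<^bsub>M\<^esub> x |r x. r \<in> J \<and> x \<in> P}" by blast
  then show ?thesis unfolding ideal_smult_def by (rule subsetD[OF span_incl])
qed

lemma ism_min:
  assumes "submodule N R M" "\<And>r x. r \<in> J \<Longrightarrow> x \<in> P \<Longrightarrow> r \<odot>\<^bsub>M\<^esub> x \<in> N"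
  shows "ideal_smult R M J P \<subseteq> N"
  unfolding ideal_smult_def by (rule span_min) (use assms in blast)+

lemma ism_le:
  assumes "J \<subseteq> carrier R" "submodule P R M"
  shows "ideal_smult R M J P \<subseteq> P"
  by (rule ism_min) (use assms submoduleD in auto)

lemma ism_mono:
  assumes "J' \<subseteq> carrier R" "P' \<subseteq> carrier M" "J \<subseteq> J'" "P \<subseteq> P'"
  shows "ideal_smult R M J P \<subseteq> ideal_smult R M J' P'"
  by (rule ism_min[OF ism_submodule[OF assms(1,2)]]) (use assms ism_gen in blast)

lemma ism_carrier:
  assumes "submodule P R M"
  shows "ideal_smult R M (carrier R) P = P"
proof
  show "ideal_smult R M (carrier R) P \<subseteq> P" using ism_le assms by auto
  show "P \<subseteq> ideal_smult R M (carrier R) P"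
  proof
    fix x assume "x \<in> P"
    then have "\<one> \<odot>\<^bsub>M\<^esub> x \<in> ideal_smult R M (carrier R) P" using ism_gen by blast
    then show "x \<in> ideal_smult R M (carrier R) P" using \<open>x \<in> P\<close> submoduleD(1)[OF assms] by auto
  qed
qed

end

context cring begin

lemma ideal_power_ideal: "ideal I R \<Longrightarrow> ideal (ideal_power R I n) R"
  by (induction n) (auto intro: ideal_prod_is_ideal oneideal)

lemma ideal_power_carrier: "ideal I R \<Longrightarrow> ideal_power R I n \<subseteq> carrier R"
  using ideal_power_ideal ideal.axioms(1) additive_subgroup.a_subset by blast

lemma ideal_power_Suc_le: "ideal I R \<Longrightarrow> ideal_power R I (Suc n) \<subseteq> ideal_power R I n"
  using ideal_prod_inter[OF ideal_power_ideal] by auto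

lemma ideal_power_antimono: "ideal I R \<Longrightarrow> m \<le> n \<Longrightarrow> ideal_power R I n \<subseteq> ideal_power R I m"
proof (induction n)
  case 0 then show ?case by auto
next
  case (Suc n)
  then show ?case using ideal_power_Suc_le[OF Suc.prems(1), of n] by (cases "m = Suc n") auto
qed

lemma ideal_power_add: "ideal I R \<Longrightarrow> ideal_power R I (m + n) = ideal_prod R (ideal_power R I m) (ideal_power R I n)"
proof (induction n)
  case 0 then show ?case using ideal_prod_one[OF ideal_power_ideal] by simp
next
  case (Suc n)
  then show ?case using ideal_prod_assoc[OF ideal_power_ideal[of I m] ideal_power_ideal[of I n] Suc.prems] by simp
qed

lemma ideal_power_one: "ideal I R \<Longrightarrow> ideal_power R I 1 = I"
  using ideal_prod_commute[OF oneideal, of I] ideal_prod_one[of I] by simp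

end

context cring begin

lemma idealI2:
  assumes "J \<subseteq> carrier R" "\<zero> \<in> J" "\<And>x y. x \<in> J \<Longrightarrow> y \<in> J \<Longrightarrow> x \<oplus> y \<in> J"
    "\<And>r x. r \<in> carrier R \<Longrightarrow> x \<in> J \<Longrightarrow> r \<otimes> x \<in> J"
  shows "ideal J R"
proof (rule idealI)
  show "ring R" by (rule ring_axioms)
  show "subgroup J (add_monoid R)"
  proof (rule subgroup.intro)
    fix x assume x: "x \<in> J"
    have "(\<ominus> \<one>) \<otimes> x = \<ominus> x" using x assms(1) l_minus by auto
    moreover have "(\<ominus> \<one>) \<otimes> x \<in> J" using assms(4) x by auto
    ultimately show "inv\<^bsub>add_monoid R\<^esub> x \<in> J" using x assms(1) a_inv_def[of R] by (simp add: a_inv_def)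
  qed (use assms in auto)
  show "\<And>a x. a \<in> J \<Longrightarrow> x \<in> carrier R \<Longrightarrow> x \<otimes> a \<in> J" using assms by auto
  show "\<And>a x. a \<in> J \<Longrightarrow> x \<in> carrier R \<Longrightarrow> a \<otimes> x \<in> J" using assms m_comm by (metis subsetD)
qed

lemma jacobson_unit:
  assumes a: "a \<in> jacobson_radical R"
  shows "\<exists>v\<in>carrier R. v \<otimes> (\<one> \<ominus> a) = \<one>"
proof (rule ccontr)
  assume nu: "\<not> ?thesis"
  have aR: "a \<in> carrier R" using a unfolding jacobson_radical_def by auto
  define u where "u = \<one> \<ominus> a"
  have uR: "u \<in> carrier R" using aR u_def by auto
  define F where "F = {P. ideal P R \<and> PIdl u \<subseteq> P \<and> \<one> \<notin> P}"
  have PIu: "ideal (PIdl u) R" using cgenideal_ideal uR by auto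
  have one_not: "\<one> \<notin> PIdl u"
  proof
    assume "\<one> \<in> PIdl u"
    then obtain v where "v \<in> carrier R" "\<one> = v \<otimes> u" unfolding cgenideal_def by auto
    then show False using nu u_def by auto
  qed
  have "\<exists>P\<in>F. \<forall>X\<in>F. P \<subseteq> X \<longrightarrow> X = P"
  proof (rule subset_Zorn)
    fix C assume C: "subset.chain F C"
    show "\<exists>U\<in>F. \<forall>X\<in>C. X \<subseteq> U"
    proof (cases "C = {}")
      case True then show ?thesis using PIu one_not unfolding F_def by auto
    next
      case False
      have ch: "subset.chain {I. ideal I R} C" using C unfolding F_def pred_on.chain_def by auto
      have "ideal (\<Union>C) R" using chain_Union_is_ideal[OF ch] False by simp
      moreover have "PIdl u \<subseteq> \<Union>C"
      proof -
        obtain X where X: "X \<in> C" using False by auto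
        then have "PIdl u \<subseteq> X" using C unfolding F_def pred_on.chain_def by auto
        then show ?thesis using X by auto
      qed
      moreover have "\<one> \<notin> \<Union>C" using C unfolding F_def pred_on.chain_def by auto
      ultimately show ?thesis unfolding F_def by auto
    qed
  qed
  then obtain P where P: "P \<in> F" "\<And>X. X \<in> F \<Longrightarrow> P \<subseteq> X \<Longrightarrow> X = P" by auto
  have Pid: "ideal P R" and uP: "u \<in> P" and oP: "\<one> \<notin> P"
    using P(1) cgenideal_self[OF uR] unfolding F_def by auto
  have "maximalideal P R"
  proof (rule maximalidealI[OF Pid])
    show "carrier R \<noteq> P" using oP by auto
    fix J assume J: "ideal J R" "P \<subseteq> J" "J \<subseteq> carrier R"
    show "J = P \<or> J = carrier R"
    proof (cases "\<one> \<in> J")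
      case True then show ?thesis using ideal.one_imp_carrier[OF J(1)] by auto
    next
      case False
      then have "J \<in> F" using J P(1) unfolding F_def by auto
      then show ?thesis using P(2) J(2) by auto
    qed
  qed
  then have "a \<in> P" using a unfolding jacobson_radical_def by blast
  then have "u \<oplus> a \<in> P" using uP Pid by (simp add: additive_subgroup.a_closed ideal.axioms(1))
  moreover have "u \<oplus> a = \<one>" using aR unfolding u_def by (simp add: a_minus_def add.m_assoc l_neg)
  ultimately show False using oP by simp
qed

end

context fmod begin

lemma lin_add:
  assumes "a \<in> carrier R" "b \<in> carrier R" "x \<in> carrier M" "s \<in> carrier M" "t \<in> carrier M"
  shows "(a \<odot>\<^bsub>M\<^esub> x \<oplus>\<^bsub>M\<^esub> s) \<oplus>\<^bsub>M\<^esub> (b \<odot>\<^bsub>M\<^esub> x \<oplus>\<^bsub>M\<^esub> t) = (a \<oplus> b) \<odot>\<^bsub>M\<^esub> x \<oplus>\<^bsub>M\<^esub> (s \<oplus>\<^bsub>M\<^esub> t)"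
  using assms by (simp add: smult_l_distr M.a_ac)

lemma lin_smult:
  assumes "a \<in> carrier R" "r \<in> carrier R" "x \<in> carrier M" "s \<in> carrier M"
  shows "r \<odot>\<^bsub>M\<^esub> (a \<odot>\<^bsub>M\<^esub> x \<oplus>\<^bsub>M\<^esub> s) = (r \<otimes> a) \<odot>\<^bsub>M\<^esub> x \<oplus>\<^bsub>M\<^esub> (r \<odot>\<^bsub>M\<^esub> s)"
  using assms by (simp add: smult_r_distr smult_assoc1)

lemma submodule_Int: "submodule P R M \<Longrightarrow> submodule Q R M \<Longrightarrow> submodule (P \<inter> Q) R M"
  using submoduleD[of P] submoduleD[of Q] by (intro submoduleI2) auto

lemma memlin: "a \<in> J \<Longrightarrow> s \<in> Q \<Longrightarrow> y = a \<odot>\<^bsub>M\<^esub> x \<oplus>\<^bsub>M\<^esub> s \<Longrightarrow> y \<in> {a \<odot>\<^bsub>M\<^esub> x \<oplus>\<^bsub>M\<^esub> s | a s. a \<in> J \<and> s \<in> Q}"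
  by blast

lemma lin_submodule:
  assumes J: "ideal J R" and x: "x \<in> carrier M" and Q: "submodule Q R M"
  shows "submodule {a \<odot>\<^bsub>M\<^esub> x \<oplus>\<^bsub>M\<^esub> s | a s. a \<in> J \<and> s \<in> Q} R M"
proof (rule submoduleI2)
  have JR: "J \<subseteq> carrier R" using J ideal.axioms(1) additive_subgroup.a_subset by blast
  note Qc = submoduleD(1)[OF Q]
  show "{a \<odot>\<^bsub>M\<^esub> x \<oplus>\<^bsub>M\<^esub> s | a s. a \<in> J \<and> s \<in> Q} \<subseteq> carrier M"
    using JR Qc x by auto
  have "\<zero> \<odot>\<^bsub>M\<^esub> x \<oplus>\<^bsub>M\<^esub> \<zero>\<^bsub>M\<^esub> = \<zero>\<^bsub>M\<^esub>" using x by (simp only: smult_l_null M.r_zero M.zero_closed)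
  then show "\<zero>\<^bsub>M\<^esub> \<in> {a \<odot>\<^bsub>M\<^esub> x \<oplus>\<^bsub>M\<^esub> s | a s. a \<in> J \<and> s \<in> Q}"
    by (intro memlin[OF additive_subgroup.zero_closed[OF ideal.axioms(1)[OF J]] submoduleD(2)[OF Q]]) simp
  fix u v assume u: "u \<in> {a \<odot>\<^bsub>M\<^esub> x \<oplus>\<^bsub>M\<^esub> s | a s. a \<in> J \<and> s \<in> Q}"
  then obtain a s where as: "a \<in> J" "s \<in> Q" "u = a \<odot>\<^bsub>M\<^esub> x \<oplus>\<^bsub>M\<^esub> s" by auto
  {
    assume "v \<in> {a \<odot>\<^bsub>M\<^esub> x \<oplus>\<^bsub>M\<^esub> s | a s. a \<in> J \<and> s \<in> Q}"
    then obtain b t where bt: "b \<in> J" "t \<in> Q" "v = b \<odot>\<^bsub>M\<^esub> x \<oplus>\<^bsub>M\<^esub> t" by auto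
    have "u \<oplus>\<^bsub>M\<^esub> v = (a \<oplus> b) \<odot>\<^bsub>M\<^esub> x \<oplus>\<^bsub>M\<^esub> (s \<oplus>\<^bsub>M\<^esub> t)"
      unfolding as(3) bt(3) by (rule lin_add) (use as bt JR Qc x in blast)+
    moreover have "a \<oplus> b \<in> J" using as bt J by (simp add: additive_subgroup.a_closed ideal.axioms(1))
    moreover have "s \<oplus>\<^bsub>M\<^esub> t \<in> Q" using as bt submoduleD(3)[OF Q] by auto
    ultimately show "u \<oplus>\<^bsub>M\<^esub> v \<in> {a \<odot>\<^bsub>M\<^esub> x \<oplus>\<^bsub>M\<^esub> s | a s. a \<in> J \<and> s \<in> Q}" by (intro memlin)
  }
  fix r assume r: "r \<in> carrier R"
  have "r \<odot>\<^bsub>M\<^esub> u = (r \<otimes> a) \<odot>\<^bsub>M\<^esub> x \<oplus>\<^bsub>M\<^esub> (r \<odot>\<^bsub>M\<^esub> s)"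
    unfolding as(3) by (rule lin_smult) (use as JR Qc x r in blast)+
  moreover have "r \<otimes> a \<in> J" using ideal.I_l_closed[OF J as(1) r] .
  moreover have "r \<odot>\<^bsub>M\<^esub> s \<in> Q" using as r submoduleD(4)[OF Q] by auto
  ultimately show "r \<odot>\<^bsub>M\<^esub> u \<in> {a \<odot>\<^bsub>M\<^esub> x \<oplus>\<^bsub>M\<^esub> s | a s. a \<in> J \<and> s \<in> Q}" by (intro memlin)
qed

lemma span_insert:
  assumes S: "S \<subseteq> carrier M" and x: "x \<in> carrier M"
  shows "mod_span R M (insert x S) = {a \<odot>\<^bsub>M\<^esub> x \<oplus>\<^bsub>M\<^esub> s | a s. a \<in> carrier R \<and> s \<in> mod_span R M S}"
proof
  have sub: "submodule {a \<odot>\<^bsub>M\<^esub> x \<oplus>\<^bsub>M\<^esub> s | a s. a \<in> carrier R \<and> s \<in> mod_span R M S} R M"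
    by (rule lin_submodule[OF oneideal x span_submodule[OF S]])
  have spS: "mod_span R M S \<subseteq> carrier M" using submoduleD(1)[OF span_submodule[OF S]] .
  have "insert x S \<subseteq> {a \<odot>\<^bsub>M\<^esub> x \<oplus>\<^bsub>M\<^esub> s | a s. a \<in> carrier R \<and> s \<in> mod_span R M S}"
  proof
    fix y assume y: "y \<in> insert x S"
    show "y \<in> {a \<odot>\<^bsub>M\<^esub> x \<oplus>\<^bsub>M\<^esub> s | a s. a \<in> carrier R \<and> s \<in> mod_span R M S}"
    proof (cases "y = x")
      case True
      have "y = \<one> \<odot>\<^bsub>M\<^esub> x \<oplus>\<^bsub>M\<^esub> \<zero>\<^bsub>M\<^esub>" using True x by simp
      then show ?thesis by (intro memlin[OF _ submoduleD(2)[OF span_submodule[OF S]]]) simp_all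
    next
      case False
      then have yS: "y \<in> mod_span R M S" using y span_incl by auto
      have "y = \<zero> \<odot>\<^bsub>M\<^esub> x \<oplus>\<^bsub>M\<^esub> y" using x yS spS by auto
      then show ?thesis by (intro memlin[OF _ yS]) simp_all
    qed
  qed
  then show "mod_span R M (insert x S) \<subseteq> {a \<odot>\<^bsub>M\<^esub> x \<oplus>\<^bsub>M\<^esub> s | a s. a \<in> carrier R \<and> s \<in> mod_span R M S}"
    by (rule span_min[OF sub])
  have ins: "insert x S \<subseteq> carrier M" using S x by auto
  show "{a \<odot>\<^bsub>M\<^esub> x \<oplus>\<^bsub>M\<^esub> s | a s. a \<in> carrier R \<and> s \<in> mod_span R M S} \<subseteq> mod_span R M (insert x S)"
  proof
    fix y assume "y \<in> {a \<odot>\<^bsub>M\<^esub> x \<oplus>\<^bsub>M\<^esub> s | a s. a \<in> carrier R \<and> s \<in> mod_span R M S}"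
    then obtain a s where as: "a \<in> carrier R" "s \<in> mod_span R M S" "y = a \<odot>\<^bsub>M\<^esub> x \<oplus>\<^bsub>M\<^esub> s" by auto
    have "x \<in> mod_span R M (insert x S)" using span_incl[of "insert x S"] by blast
    then have "a \<odot>\<^bsub>M\<^esub> x \<in> mod_span R M (insert x S)" using submoduleD(4)[OF span_submodule[OF ins]] as by auto
    moreover have "s \<in> mod_span R M (insert x S)" using span_mono[of S "insert x S"] ins as by auto
    ultimately show "y \<in> mod_span R M (insert x S)" using submoduleD(3)[OF span_submodule[OF ins]] as by auto
  qed
qed

lemma zero_submodule: "submodule {\<zero>\<^bsub>M\<^esub>} R M"
  by (rule submoduleI2) auto

lemma span_empty: "mod_span R M {} = {\<zero>\<^bsub>M\<^esub>}"
  using span_min[OF zero_submodule, of "{}"] submoduleD(2)[OF span_submodule[of "{}"]] by auto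

lemma colon_ideal:
  assumes Q: "submodule Q R M" and x: "x \<in> carrier M" and S: "S \<subseteq> carrier M"
  shows "ideal {c \<in> carrier R. \<exists>s\<in>mod_span R M S. c \<odot>\<^bsub>M\<^esub> x \<oplus>\<^bsub>M\<^esub> s \<in> Q} R"
proof (rule idealI2)
  note spS = submoduleD[OF span_submodule[OF S]]
  show "{c \<in> carrier R. \<exists>s\<in>mod_span R M S. c \<odot>\<^bsub>M\<^esub> x \<oplus>\<^bsub>M\<^esub> s \<in> Q} \<subseteq> carrier R" by auto
  have "\<zero> \<odot>\<^bsub>M\<^esub> x \<oplus>\<^bsub>M\<^esub> \<zero>\<^bsub>M\<^esub> \<in> Q" using x submoduleD(2)[OF Q] by simp
  then show "\<zero> \<in> {c \<in> carrier R. \<exists>s\<in>mod_span R M S. c \<odot>\<^bsub>M\<^esub> x \<oplus>\<^bsub>M\<^esub> s \<in> Q}" using spS(2) by auto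
  fix c d assume c: "c \<in> {c \<in> carrier R. \<exists>s\<in>mod_span R M S. c \<odot>\<^bsub>M\<^esub> x \<oplus>\<^bsub>M\<^esub> s \<in> Q}"
  then obtain s where s: "c \<in> carrier R" "s \<in> mod_span R M S" "c \<odot>\<^bsub>M\<^esub> x \<oplus>\<^bsub>M\<^esub> s \<in> Q" by auto
  {
    assume "d \<in> {c \<in> carrier R. \<exists>s\<in>mod_span R M S. c \<odot>\<^bsub>M\<^esub> x \<oplus>\<^bsub>M\<^esub> s \<in> Q}"
    then obtain t where t: "d \<in> carrier R" "t \<in> mod_span R M S" "d \<odot>\<^bsub>M\<^esub> x \<oplus>\<^bsub>M\<^esub> t \<in> Q" by auto
    have "(c \<odot>\<^bsub>M\<^esub> x \<oplus>\<^bsub>M\<^esub> s) \<oplus>\<^bsub>M\<^esub> (d \<odot>\<^bsub>M\<^esub> x \<oplus>\<^bsub>M\<^esub> t) \<in> Q"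
      using s t submoduleD(3)[OF Q] by auto
    moreover have "(c \<odot>\<^bsub>M\<^esub> x \<oplus>\<^bsub>M\<^esub> s) \<oplus>\<^bsub>M\<^esub> (d \<odot>\<^bsub>M\<^esub> x \<oplus>\<^bsub>M\<^esub> t) = (c \<oplus> d) \<odot>\<^bsub>M\<^esub> x \<oplus>\<^bsub>M\<^esub> (s \<oplus>\<^bsub>M\<^esub> t)"
      by (rule lin_add) (use s t x spS(1) in blast)+
    ultimately have "(c \<oplus> d) \<odot>\<^bsub>M\<^esub> x \<oplus>\<^bsub>M\<^esub> (s \<oplus>\<^bsub>M\<^esub> t) \<in> Q" by simp
    then show "c \<oplus> d \<in> {c \<in> carrier R. \<exists>s\<in>mod_span R M S. c \<odot>\<^bsub>M\<^esub> x \<oplus>\<^bsub>M\<^esub> s \<in> Q}"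
      using s t spS(3) by auto
  }
  fix r assume r: "r \<in> carrier R"
  have "r \<odot>\<^bsub>M\<^esub> (c \<odot>\<^bsub>M\<^esub> x \<oplus>\<^bsub>M\<^esub> s) \<in> Q" using s r submoduleD(4)[OF Q] by auto
  moreover have "r \<odot>\<^bsub>M\<^esub> (c \<odot>\<^bsub>M\<^esub> x \<oplus>\<^bsub>M\<^esub> s) = (r \<otimes> c) \<odot>\<^bsub>M\<^esub> x \<oplus>\<^bsub>M\<^esub> (r \<odot>\<^bsub>M\<^esub> s)"
    by (rule lin_smult) (use s r x spS(1) in blast)+
  ultimately have "(r \<otimes> c) \<odot>\<^bsub>M\<^esub> x \<oplus>\<^bsub>M\<^esub> (r \<odot>\<^bsub>M\<^esub> s) \<in> Q" by simp
  then show "r \<otimes> c \<in> {c \<in> carrier R. \<exists>s\<in>mod_span R M S. c \<odot>\<^bsub>M\<^esub> x \<oplus>\<^bsub>M\<^esub> s \<in> Q}"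
    using s r spS(4) by auto
qed

lemma minus_cancel_lin:
  assumes "y \<in> carrier M" "z \<in> carrier M"
  shows "(y \<ominus>\<^bsub>M\<^esub> z) \<oplus>\<^bsub>M\<^esub> z = y"
  using assms by (simp add: a_minus_def M.a_assoc M.l_neg)

lemma lin_minus:
  assumes "c \<in> carrier R" "x \<in> carrier M" "s \<in> carrier M" "t \<in> carrier M"
  shows "(c \<odot>\<^bsub>M\<^esub> x \<oplus>\<^bsub>M\<^esub> s) \<ominus>\<^bsub>M\<^esub> (c \<odot>\<^bsub>M\<^esub> x \<oplus>\<^bsub>M\<^esub> t) = s \<ominus>\<^bsub>M\<^esub> t"
  using assms by (simp add: a_minus_def M.minus_add M.a_ac M.r_neg M.r_neg2)

end

locale nfmod = fmod + noetherian_ring R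

context nfmod begin

lemma fg_sub:
  assumes "finite S"
  shows "S \<subseteq> carrier M \<Longrightarrow> submodule N R M \<Longrightarrow> N \<subseteq> mod_span R M S \<Longrightarrow>
    \<exists>T. finite T \<and> T \<subseteq> N \<and> N = mod_span R M T"
  using assms
proof (induction S arbitrary: N rule: finite_induct)
  case empty
  then have "N = {\<zero>\<^bsub>M\<^esub>}" using span_empty submoduleD(2)[OF empty(2)] by auto
  then show ?case using span_empty by auto
next
  case (insert x S)
  have S: "S \<subseteq> carrier M" and x: "x \<in> carrier M" using insert.prems by auto
  note N = insert.prems(2)
  note Nc = submoduleD[OF N]
  note spS = submoduleD[OF span_submodule[OF S]]
  define J where "J = {c \<in> carrier R. \<exists>s\<in>mod_span R M S. c \<odot>\<^bsub>M\<^esub> x \<oplus>\<^bsub>M\<^esub> s \<in> N}"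
  have Jid: "ideal J R" unfolding J_def by (rule colon_ideal[OF N x S])
  obtain A where A: "A \<subseteq> carrier R" "finite A" "J = Idl A" using finetely_gen[OF Jid] by auto
  have AJ: "A \<subseteq> J" using A genideal_self by auto
  define sa where "sa = (\<lambda>a. SOME s. s \<in> mod_span R M S \<and> a \<odot>\<^bsub>M\<^esub> x \<oplus>\<^bsub>M\<^esub> s \<in> N)"
  have sa: "sa a \<in> mod_span R M S \<and> a \<odot>\<^bsub>M\<^esub> x \<oplus>\<^bsub>M\<^esub> sa a \<in> N" if "a \<in> A" for a
  proof -
    have "\<exists>s. s \<in> mod_span R M S \<and> a \<odot>\<^bsub>M\<^esub> x \<oplus>\<^bsub>M\<^esub> s \<in> N" using AJ that unfolding J_def by blast
    then show ?thesis unfolding sa_def by (rule someI_ex)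
  qed
  define G where "G = (\<lambda>a. a \<odot>\<^bsub>M\<^esub> x \<oplus>\<^bsub>M\<^esub> sa a) ` A"
  have GN: "G \<subseteq> N" using sa unfolding G_def by auto
  have GM: "G \<subseteq> carrier M" using GN Nc(1) by auto
  have N'sub: "submodule (N \<inter> mod_span R M S) R M" by (rule submodule_Int[OF N span_submodule[OF S]])
  obtain T0 where T0: "finite T0" "T0 \<subseteq> N \<inter> mod_span R M S" "N \<inter> mod_span R M S = mod_span R M T0"
    using insert.IH[OF S N'sub] by auto
  define T where "T = T0 \<union> G"
  have TN: "T \<subseteq> N" using T0(2) GN unfolding T_def by auto
  have TM: "T \<subseteq> carrier M" using TN Nc(1) by auto
  have "N = mod_span R M T"
  proof
    show "mod_span R M T \<subseteq> N" by (rule span_min[OF N TN])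
    show "N \<subseteq> mod_span R M T"
    proof
      fix y assume y: "y \<in> N"
      then have "y \<in> mod_span R M (insert x S)" using insert.prems(3) by auto
      then obtain c s where cs: "c \<in> carrier R" "s \<in> mod_span R M S" "y = c \<odot>\<^bsub>M\<^esub> x \<oplus>\<^bsub>M\<^esub> s"
        using span_insert[OF S x] by auto
      have cJ: "c \<in> J" unfolding J_def using cs y by auto
      define J' where "J' = {c \<in> carrier R. \<exists>s\<in>mod_span R M S. c \<odot>\<^bsub>M\<^esub> x \<oplus>\<^bsub>M\<^esub> s \<in> mod_span R M G}"
      have J'id: "ideal J' R" unfolding J'_def by (rule colon_ideal[OF span_submodule[OF GM] x S])
      have "A \<subseteq> J'"
      proof
        fix a assume a: "a \<in> A"
        have "a \<odot>\<^bsub>M\<^esub> x \<oplus>\<^bsub>M\<^esub> sa a \<in> mod_span R M G"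
          using a span_incl[of G] unfolding G_def by blast
        then show "a \<in> J'" unfolding J'_def using sa[OF a] a A(1) by blast
      qed
      then have "J \<subseteq> J'" using A(3) genideal_minimal[OF J'id] by auto
      then obtain s' where s': "s' \<in> mod_span R M S" "c \<odot>\<^bsub>M\<^esub> x \<oplus>\<^bsub>M\<^esub> s' \<in> mod_span R M G"
        using cJ unfolding J'_def by blast
      define z where "z = c \<odot>\<^bsub>M\<^esub> x \<oplus>\<^bsub>M\<^esub> s'"
      have zG: "z \<in> mod_span R M G" using s' z_def by simp
      have zN: "z \<in> N" using zG span_min[OF N GN] by auto
      have zT: "z \<in> mod_span R M T" using zG span_mono[of G T] TM unfolding T_def by auto
      have yz: "y \<ominus>\<^bsub>M\<^esub> z = s \<ominus>\<^bsub>M\<^esub> s'"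
        unfolding cs(3) z_def by (rule lin_minus) (use cs s' x spS(1) in blast)+
      have "y \<ominus>\<^bsub>M\<^esub> z \<in> mod_span R M S" using yz spS(6) cs s' by simp
      moreover have "y \<ominus>\<^bsub>M\<^esub> z \<in> N" using Nc(6) y zN by simp
      ultimately have "y \<ominus>\<^bsub>M\<^esub> z \<in> mod_span R M T0" using T0(3) by blast
      then have "y \<ominus>\<^bsub>M\<^esub> z \<in> mod_span R M T" using span_mono[of T0 T] TM unfolding T_def by auto
      then have "(y \<ominus>\<^bsub>M\<^esub> z) \<oplus>\<^bsub>M\<^esub> z \<in> mod_span R M T"
        using zT submoduleD(3)[OF span_submodule[OF TM]] by blast
      moreover have "(y \<ominus>\<^bsub>M\<^esub> z) \<oplus>\<^bsub>M\<^esub> z = y" by (rule minus_cancel_lin) (use y zN Nc(1) in blast)+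
      ultimately show "y \<in> mod_span R M T" by simp
    qed
  qed
  moreover have "finite T" using T0(1) A(2) unfolding T_def G_def by auto
  ultimately show ?case using TN by blast
qed

end

locale nfgmod = nfmod +
  assumes fgM: "fin_gen_module R M"

context nfgmod begin

lemma all_fg:
  assumes "submodule N R M"
  shows "\<exists>T. finite T \<and> T \<subseteq> N \<and> N = mod_span R M T"
proof -
  obtain S where S: "S \<subseteq> carrier M" "finite S" "mod_span R M S = carrier M"
    using fgM unfolding fin_gen_module_def by auto
  show ?thesis using fg_sub[OF S(2) S(1) assms] submoduleD(1)[OF assms] S(3) by auto
qed

lemma chain_union_submodule:
  assumes C: "subset.chain F C" "C \<noteq> {}" and F: "\<And>P. P \<in> F \<Longrightarrow> submodule P R M"
  shows "submodule (\<Union>C) R M"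
proof (rule submoduleI2)
  have CF: "C \<subseteq> F" using C unfolding pred_on.chain_def by auto
  show "\<Union>C \<subseteq> carrier M" using CF F submoduleD(1) by blast
  obtain X where X: "X \<in> C" using C by auto
  then show "\<zero>\<^bsub>M\<^esub> \<in> \<Union>C" using CF F submoduleD(2) by blast
  show "r \<odot>\<^bsub>M\<^esub> x \<in> \<Union>C" if "r \<in> carrier R" "x \<in> \<Union>C" for r x
    using that CF F submoduleD(4) by blast
  show "x \<oplus>\<^bsub>M\<^esub> y \<in> \<Union>C" if xy: "x \<in> \<Union>C" "y \<in> \<Union>C" for x y
  proof -
    obtain X Y where XY: "X \<in> C" "Y \<in> C" "x \<in> X" "y \<in> Y" using xy by auto
    then have "X \<subseteq> Y \<or> Y \<subseteq> X" using C unfolding pred_on.chain_def by blast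
    then show ?thesis using XY CF F submoduleD(3) by blast
  qed
qed

lemma chain_finite_bound:
  assumes C: "subset.chain F C" "C \<noteq> {}" and T: "finite T" "T \<subseteq> \<Union>C"
  shows "\<exists>X\<in>C. T \<subseteq> X"
  using T
proof (induction T rule: finite_induct)
  case empty then show ?case using C by auto
next
  case (insert t T)
  then obtain X where X: "X \<in> C" "T \<subseteq> X" by auto
  obtain Y where Y: "Y \<in> C" "t \<in> Y" using insert.prems by auto
  have "X \<subseteq> Y \<or> Y \<subseteq> X" using C X Y unfolding pred_on.chain_def by blast
  then show ?case using X Y by blast
qed

lemma maximal_principle:
  assumes "F \<noteq> {}" "\<And>P. P \<in> F \<Longrightarrow> submodule P R M"
  shows "\<exists>P\<in>F. \<forall>Q\<in>F. P \<subseteq> Q \<longrightarrow> Q = P"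
proof (rule subset_Zorn)
  fix C assume C: "subset.chain F C"
  show "\<exists>U\<in>F. \<forall>X\<in>C. X \<subseteq> U"
  proof (cases "C = {}")
    case True then show ?thesis using assms(1) by auto
  next
    case False
    have CF: "C \<subseteq> F" using C unfolding pred_on.chain_def by auto
    have U: "submodule (\<Union>C) R M" by (rule chain_union_submodule[OF C False assms(2)])
    obtain T where T: "finite T" "T \<subseteq> \<Union>C" "\<Union>C = mod_span R M T" using all_fg[OF U] by auto
    obtain X where X: "X \<in> C" "T \<subseteq> X" using chain_finite_bound[OF C False T(1,2)] by auto
    have "\<Union>C \<subseteq> X" using T(3) span_min[OF assms(2) X(2)] X(1) CF by auto
    then show ?thesis using X(1) CF by auto
  qed
qed

end

context cring begin

lemma ideal_prod_mono:
  assumes "I1 \<subseteq> I2" "J1 \<subseteq> J2"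
  shows "ideal_prod R I1 J1 \<subseteq> ideal_prod R I2 J2"
proof
  fix x assume "x \<in> ideal_prod R I1 J1"
  then show "x \<in> ideal_prod R I2 J2"
  proof (induction rule: ideal_prod.induct)
    case (prod i j) then show ?case using assms by (auto intro: ideal_prod.prod)
  next
    case (sum s1 s2) then show ?case by (auto intro: ideal_prod.sum)
  qed
qed

lemma prod_gen:
  assumes B: "B \<subseteq> carrier R" and C: "C \<subseteq> carrier R"
  shows "ideal_prod R (Idl B) (Idl C) \<subseteq> Idl {b \<otimes> c | b c. b \<in> B \<and> c \<in> C}"
proof -
  define D where "D = Idl {b \<otimes> c | b c. b \<in> B \<and> c \<in> C}"
  have DC: "{b \<otimes> c | b c. b \<in> B \<and> c \<in> C} \<subseteq> carrier R" using B C by auto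
  have Did: "ideal D R" unfolding D_def by (rule genideal_ideal[OF DC])
  note Dsub = ideal.axioms(1)[OF Did]
  have DR: "D \<subseteq> carrier R" using Dsub additive_subgroup.a_subset by blast
  have IC: "Idl C \<subseteq> carrier R" using genideal_ideal[OF C] ideal.axioms(1) additive_subgroup.a_subset by blast
  have IB: "Idl B \<subseteq> carrier R" using genideal_ideal[OF B] ideal.axioms(1) additive_subgroup.a_subset by blast
  have Yb: "Idl C \<subseteq> {j \<in> carrier R. b \<otimes> j \<in> D}" if b: "b \<in> B" for b
  proof (rule genideal_minimal)
    have bR: "b \<in> carrier R" using b B by auto
    show "ideal {j \<in> carrier R. b \<otimes> j \<in> D} R"
    proof (rule idealI2)
      show "\<zero> \<in> {j \<in> carrier R. b \<otimes> j \<in> D}" using bR additive_subgroup.zero_closed[OF Dsub] by simp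
      fix x y assume x: "x \<in> {j \<in> carrier R. b \<otimes> j \<in> D}"
      { assume y: "y \<in> {j \<in> carrier R. b \<otimes> j \<in> D}"
        have "b \<otimes> (x \<oplus> y) = b \<otimes> x \<oplus> b \<otimes> y" using x y bR r_distr by auto
        then show "x \<oplus> y \<in> {j \<in> carrier R. b \<otimes> j \<in> D}" using x y additive_subgroup.a_closed[OF Dsub] by auto }
      fix r assume r: "r \<in> carrier R"
      have "b \<otimes> (r \<otimes> x) = r \<otimes> (b \<otimes> x)" using x r bR m_lcomm by auto
      then show "r \<otimes> x \<in> {j \<in> carrier R. b \<otimes> j \<in> D}" using x r ideal.I_l_closed[OF Did] by auto
    qed auto
    show "C \<subseteq> {j \<in> carrier R. b \<otimes> j \<in> D}"
    proof
      fix c assume c: "c \<in> C"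
      have "b \<otimes> c \<in> {b \<otimes> c | b c. b \<in> B \<and> c \<in> C}" using b c by blast
      then show "c \<in> {j \<in> carrier R. b \<otimes> j \<in> D}" using genideal_self[OF DC] c C unfolding D_def by auto
    qed
  qed
  have X: "Idl B \<subseteq> {i \<in> carrier R. \<forall>j\<in>Idl C. i \<otimes> j \<in> D}"
  proof (rule genideal_minimal)
    show "ideal {i \<in> carrier R. \<forall>j\<in>Idl C. i \<otimes> j \<in> D} R"
    proof (rule idealI2)
      show "\<zero> \<in> {i \<in> carrier R. \<forall>j\<in>Idl C. i \<otimes> j \<in> D}" using IC additive_subgroup.zero_closed[OF Dsub] by auto
      fix x y assume x: "x \<in> {i \<in> carrier R. \<forall>j\<in>Idl C. i \<otimes> j \<in> D}"
      { assume y: "y \<in> {i \<in> carrier R. \<forall>j\<in>Idl C. i \<otimes> j \<in> D}"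
        have "(x \<oplus> y) \<otimes> j = x \<otimes> j \<oplus> y \<otimes> j" if "j \<in> Idl C" for j using x y IC that l_distr by auto
        then show "x \<oplus> y \<in> {i \<in> carrier R. \<forall>j\<in>Idl C. i \<otimes> j \<in> D}" using x y additive_subgroup.a_closed[OF Dsub] by auto }
      fix r assume r: "r \<in> carrier R"
      have "(r \<otimes> x) \<otimes> j = r \<otimes> (x \<otimes> j)" if "j \<in> Idl C" for j using x r IC that m_assoc by auto
      then show "r \<otimes> x \<in> {i \<in> carrier R. \<forall>j\<in>Idl C. i \<otimes> j \<in> D}" using x r ideal.I_l_closed[OF Did] by auto
    qed auto
    show "B \<subseteq> {i \<in> carrier R. \<forall>j\<in>Idl C. i \<otimes> j \<in> D}" using Yb B by auto
  qed
  show ?thesis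
  proof
    fix x assume "x \<in> ideal_prod R (Idl B) (Idl C)"
    then show "x \<in> Idl {b \<otimes> c | b c. b \<in> B \<and> c \<in> C}"
    proof (induction rule: ideal_prod.induct)
      case (prod i j) then show ?case using X unfolding D_def by auto
    next
      case (sum s1 s2) then show ?case using additive_subgroup.a_closed[OF Dsub] unfolding D_def by auto
    qed
  qed
qed

lemma foldr_filter:
  assumes "set xs \<subseteq> carrier R" "a \<in> carrier R"
  shows "foldr (\<otimes>) xs \<one> = a [^] (length (filter ((=) a) xs)) \<otimes> foldr (\<otimes>) (filter (\<lambda>y. y \<noteq> a) xs) \<one>"
  using assms
proof (induction xs)
  case Nil then show ?case by simp
next
  case (Cons y xs)
  have fc: "foldr (\<otimes>) zs \<one> \<in> carrier R" if "set zs \<subseteq> carrier R" for zs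
    using that by (induction zs) auto
  have c1: "foldr (\<otimes>) (filter (\<lambda>y. y \<noteq> a) xs) \<one> \<in> carrier R"
    by (rule fc) (use Cons.prems in auto)
  show ?case
  proof (cases "y = a")
    case True
    then show ?thesis using Cons c1 by (simp add: m_assoc nat_pow_Suc2 m_lcomm)
  next
    case False
    then show ?thesis using Cons c1 by (simp add: m_lcomm)
  qed
qed

lemma pigeon_lists:
  assumes "finite A" "A \<subseteq> carrier R" "ideal Q R" "\<And>a. a \<in> A \<Longrightarrow> a [^] m \<in> Q"
  shows "set xs \<subseteq> A \<Longrightarrow> card A * m < length xs \<Longrightarrow> foldr (\<otimes>) xs \<one> \<in> Q"
  using assms
proof (induction A arbitrary: xs rule: finite_induct)
  case empty then show ?case by simp
next
  case (insert a A)
  have aR: "a \<in> carrier R" using insert.prems by auto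
  have xsR: "set xs \<subseteq> carrier R" using insert.prems by auto
  define ys where "ys = filter (\<lambda>y. y \<noteq> a) xs"
  define j where "j = length (filter ((=) a) xs)"
  have ysR: "set ys \<subseteq> carrier R" using xsR unfolding ys_def by auto
  have fc: "foldr (\<otimes>) zs \<one> \<in> carrier R" if "set zs \<subseteq> carrier R" for zs
    using that by (induction zs) auto
  have eq: "foldr (\<otimes>) xs \<one> = a [^] j \<otimes> foldr (\<otimes>) ys \<one>"
    unfolding j_def ys_def by (rule foldr_filter[OF xsR aR])
  have len: "length xs = j + length ys"
    unfolding j_def ys_def using sum_length_filter_compl[of "(=) a" xs]
    by (metis (mono_tags, lifting) filter_cong)
  show ?case
  proof (cases "m \<le> j")
    case True
    have "a [^] j = a [^] m \<otimes> a [^] (j - m)" using True aR by (simp add: nat_pow_mult)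
    then have "a [^] j \<in> Q" using insert.prems(5)[of a] ideal.I_r_closed[OF insert.prems(4)] aR by auto
    then show ?thesis using eq ideal.I_r_closed[OF insert.prems(4)] fc[OF ysR] by auto
  next
    case False
    have "card (insert a A) = Suc (card A)" using insert.hyps by simp
    then have "card A * m < length ys" using insert.prems(2) len False by (simp add: algebra_simps)
    moreover have "set ys \<subseteq> A" using insert.prems(1) unfolding ys_def by auto
    ultimately have "foldr (\<otimes>) ys \<one> \<in> Q" using insert.IH insert.prems by auto
    then show ?thesis using eq ideal.I_l_closed[OF insert.prems(4)] aR by auto
  qed
qed

lemma power_in_ideal:
  assumes A: "finite A" "A \<subseteq> carrier R" and Q: "ideal Q R" and pw: "\<And>a. a \<in> A \<Longrightarrow> \<exists>m::nat. a [^] m \<in> Q"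
  shows "\<exists>k. ideal_power R (Idl A) k \<subseteq> Q"
proof -
  define mf where "mf = (\<lambda>a. SOME m::nat. a [^] m \<in> Q)"
  have mf: "a [^] mf a \<in> Q" if "a \<in> A" for a unfolding mf_def using pw[OF that] by (rule someI_ex)
  define m where "m = Max (mf ` A)"
  have mA: "a [^] m \<in> Q" if a: "a \<in> A" for a
  proof -
    have "mf a \<le> m" unfolding m_def using A(1) a by auto
    then have "a [^] m = a [^] mf a \<otimes> a [^] (m - mf a)" using a A(2) by (auto simp: nat_pow_mult)
    then show ?thesis using mf[OF a] ideal.I_r_closed[OF Q] a A(2) by auto
  qed
  define PL where "PL = (\<lambda>n. {foldr (\<otimes>) xs \<one> | xs. set xs \<subseteq> A \<and> length xs = n})"
  have fc: "foldr (\<otimes>) zs \<one> \<in> carrier R" if "set zs \<subseteq> carrier R" for zs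
    using that by (induction zs) auto
  have PLc: "PL n \<subseteq> carrier R" for n unfolding PL_def using fc A(2) by auto
  have pow: "ideal_power R (Idl A) n \<subseteq> Idl (PL n)" for n
  proof (induction n)
    case 0
    have "PL 0 = {\<one>}" unfolding PL_def by auto
    then show ?case using genideal_one by simp
  next
    case (Suc n)
    have "ideal_power R (Idl A) (Suc n) = ideal_prod R (ideal_power R (Idl A) n) (Idl A)" by simp
    also have "\<dots> \<subseteq> ideal_prod R (Idl (PL n)) (Idl A)" by (rule ideal_prod_mono[OF Suc.IH]) simp
    also have "\<dots> \<subseteq> Idl {b \<otimes> c | b c. b \<in> PL n \<and> c \<in> A}" by (rule prod_gen[OF PLc A(2)])
    also have "\<dots> \<subseteq> Idl (PL (Suc n))"
    proof (rule subset_Idl_subset[OF PLc])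
      show "{b \<otimes> c | b c. b \<in> PL n \<and> c \<in> A} \<subseteq> PL (Suc n)"
      proof
        fix y assume "y \<in> {b \<otimes> c | b c. b \<in> PL n \<and> c \<in> A}"
        then obtain xs c where xc: "set xs \<subseteq> A" "length xs = n" "c \<in> A" "y = foldr (\<otimes>) xs \<one> \<otimes> c"
          unfolding PL_def by blast
        have "foldr (\<otimes>) xs \<one> \<in> carrier R" using fc[of xs] xc(1) A(2) by auto
        then have "y = foldr (\<otimes>) (c # xs) \<one>" using xc(3,4) A(2) m_comm[of "foldr (\<otimes>) xs \<one>" c] by auto
        then show "y \<in> PL (Suc n)" unfolding PL_def using xc by (intro CollectI exI[of _ "c # xs"]) auto
      qed
    qed
    finally show ?case .
  qed
  have "PL (card A * m + 1) \<subseteq> Q"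
  proof
    fix y assume "y \<in> PL (card A * m + 1)"
    then obtain xs where xs: "set xs \<subseteq> A" "length xs = card A * m + 1" "y = foldr (\<otimes>) xs \<one>"
      unfolding PL_def by blast
    show "y \<in> Q" using pigeon_lists[OF A Q mA xs(1)] xs by auto
  qed
  then have "Idl (PL (card A * m + 1)) \<subseteq> Q" by (rule genideal_minimal[OF Q])
  then show ?thesis using pow by blast
qed

end


context fmod begin

lemma lin_solve:
  assumes a: "a \<in> carrier R" and x: "x \<in> carrier M" and s: "s \<in> carrier M"
    and eq: "x = a \<odot>\<^bsub>M\<^esub> x \<oplus>\<^bsub>M\<^esub> s"
  shows "(\<one> \<ominus> a) \<odot>\<^bsub>M\<^esub> x = s"
proof -
  define w where "w = a \<odot>\<^bsub>M\<^esub> x"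
  have w: "w \<in> carrier M" unfolding w_def using a x by simp
  have e: "x = w \<oplus>\<^bsub>M\<^esub> s" using eq unfolding w_def .
  have "(\<one> \<ominus> a) \<odot>\<^bsub>M\<^esub> x = x \<oplus>\<^bsub>M\<^esub> \<ominus>\<^bsub>M\<^esub> w"
    unfolding w_def using a x by (simp add: a_minus_def smult_l_distr smult_l_minus)
  also have "\<dots> = (w \<oplus>\<^bsub>M\<^esub> s) \<oplus>\<^bsub>M\<^esub> \<ominus>\<^bsub>M\<^esub> w" using e by simp
  also have "\<dots> = s" using w s by (metis M.add.m_comm M.add.m_assoc M.r_neg M.r_zero M.add.inv_closed)
  finally show ?thesis .
qed

lemma nakayama:
  assumes I: "ideal I R" "I \<subseteq> jacobson_radical R" and S: "finite S"
  shows "S \<subseteq> carrier M \<Longrightarrow> mod_span R M S \<subseteq> ideal_smult R M I (mod_span R M S) \<Longrightarrow> mod_span R M S = {\<zero>\<^bsub>M\<^esub>}"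
  using S
proof (induction S rule: finite_induct)
  case empty then show ?case using span_empty by simp
next
  case (insert x S)
  have SM: "S \<subseteq> carrier M" and x: "x \<in> carrier M" and ins: "insert x S \<subseteq> carrier M" using insert.prems by auto
  have IR: "I \<subseteq> carrier R" using I(1) ideal.axioms(1) additive_subgroup.a_subset by blast
  note spS = submoduleD[OF span_submodule[OF SM]]
  define T where "T = {a \<odot>\<^bsub>M\<^esub> x \<oplus>\<^bsub>M\<^esub> s | a s. a \<in> I \<and> s \<in> mod_span R M S}"
  have Tsub: "submodule T R M" unfolding T_def by (rule lin_submodule[OF I(1) x span_submodule[OF SM]])
  have "ideal_smult R M I (mod_span R M (insert x S)) \<subseteq> T"
  proof (rule ism_min[OF Tsub])
    fix r p assume r: "r \<in> I" and p: "p \<in> mod_span R M (insert x S)"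
    then obtain c s where cs: "c \<in> carrier R" "s \<in> mod_span R M S" "p = c \<odot>\<^bsub>M\<^esub> x \<oplus>\<^bsub>M\<^esub> s"
      using span_insert[OF SM x] by auto
    have rR: "r \<in> carrier R" using r IR by auto
    have "r \<odot>\<^bsub>M\<^esub> p = (r \<otimes> c) \<odot>\<^bsub>M\<^esub> x \<oplus>\<^bsub>M\<^esub> (r \<odot>\<^bsub>M\<^esub> s)"
      unfolding cs(3) by (rule lin_smult) (use cs x rR spS(1) in blast)+
    moreover have "r \<otimes> c \<in> I" using ideal.I_r_closed[OF I(1) r cs(1)] .
    moreover have "r \<odot>\<^bsub>M\<^esub> s \<in> mod_span R M S" using spS(4) rR cs(2) by blast
    ultimately show "r \<odot>\<^bsub>M\<^esub> p \<in> T" unfolding T_def by (intro memlin)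
  qed
  moreover have "x \<in> mod_span R M (insert x S)" using span_incl[of "insert x S"] by blast
  ultimately have "x \<in> T" using insert.prems(2) by blast
  then obtain a s where as: "a \<in> I" "s \<in> mod_span R M S" "x = a \<odot>\<^bsub>M\<^esub> x \<oplus>\<^bsub>M\<^esub> s" unfolding T_def by blast
  have aR: "a \<in> carrier R" using as IR by auto
  have sM: "s \<in> carrier M" using as spS(1) by auto
  obtain v where v: "v \<in> carrier R" "v \<otimes> (\<one> \<ominus> a) = \<one>" using jacobson_unit as(1) I(2) by blast
  have e1: "(\<one> \<ominus> a) \<odot>\<^bsub>M\<^esub> x = s" by (rule lin_solve[OF aR x sM as(3)])
  have "(v \<otimes> (\<one> \<ominus> a)) \<odot>\<^bsub>M\<^esub> x = v \<odot>\<^bsub>M\<^esub> ((\<one> \<ominus> a) \<odot>\<^bsub>M\<^esub> x)" by (rule smult_assoc1) (use v aR x in auto)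
  then have "v \<odot>\<^bsub>M\<^esub> s = (v \<otimes> (\<one> \<ominus> a)) \<odot>\<^bsub>M\<^esub> x" using e1 by simp
  then have "x = v \<odot>\<^bsub>M\<^esub> s" using v x by simp
  then have xS: "x \<in> mod_span R M S" using spS(4)[OF v(1) as(2)] by simp
  have eqsp: "mod_span R M (insert x S) = mod_span R M S"
  proof
    show "mod_span R M (insert x S) \<subseteq> mod_span R M S"
      by (rule span_min[OF span_submodule[OF SM]]) (use xS span_incl[of S] in blast)
    show "mod_span R M S \<subseteq> mod_span R M (insert x S)" by (rule span_mono) (use ins in auto)
  qed
  have "mod_span R M S = {\<zero>\<^bsub>M\<^esub>}" using insert.IH[OF SM] insert.prems(2) eqsp by simp
  then show ?case using eqsp by simp
qed

end

context fmod begin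

definition msum :: "'m set \<Rightarrow> 'm set \<Rightarrow> 'm set" where
  "msum P Q = {p \<oplus>\<^bsub>M\<^esub> q | p q. p \<in> P \<and> q \<in> Q}"

lemma msum_submodule:
  assumes P: "submodule P R M" and Q: "submodule Q R M"
  shows "submodule (msum P Q) R M"
proof (rule submoduleI2)
  note Pc = submoduleD[OF P] and Qc = submoduleD[OF Q]
  show "msum P Q \<subseteq> carrier M" unfolding msum_def using Pc(1) Qc(1) by auto
  have "\<zero>\<^bsub>M\<^esub> = \<zero>\<^bsub>M\<^esub> \<oplus>\<^bsub>M\<^esub> \<zero>\<^bsub>M\<^esub>" by simp
  then show "\<zero>\<^bsub>M\<^esub> \<in> msum P Q" unfolding msum_def using Pc(2) Qc(2) by blast
  fix x y assume x: "x \<in> msum P Q"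
  then obtain p q where pq: "p \<in> P" "q \<in> Q" "x = p \<oplus>\<^bsub>M\<^esub> q" unfolding msum_def by blast
  { assume "y \<in> msum P Q"
    then obtain p' q' where pq': "p' \<in> P" "q' \<in> Q" "y = p' \<oplus>\<^bsub>M\<^esub> q'" unfolding msum_def by blast
    have "x \<oplus>\<^bsub>M\<^esub> y = (p \<oplus>\<^bsub>M\<^esub> p') \<oplus>\<^bsub>M\<^esub> (q \<oplus>\<^bsub>M\<^esub> q')"
    proof -
      have c: "p \<in> carrier M" "q \<in> carrier M" "p' \<in> carrier M" "q' \<in> carrier M" using pq pq' Pc(1) Qc(1) by auto
      show ?thesis unfolding pq(3) pq'(3) using c by (simp add: M.a_ac)
    qed
    then show "x \<oplus>\<^bsub>M\<^esub> y \<in> msum P Q" unfolding msum_def using pq pq' Pc(3) Qc(3) by blast }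
  fix r assume r: "r \<in> carrier R"
  have "r \<odot>\<^bsub>M\<^esub> x = r \<odot>\<^bsub>M\<^esub> p \<oplus>\<^bsub>M\<^esub> r \<odot>\<^bsub>M\<^esub> q"
  proof -
    have c: "p \<in> carrier M" "q \<in> carrier M" using pq Pc(1) Qc(1) by auto
    show ?thesis unfolding pq(3) using c r by (simp add: smult_r_distr)
  qed
  then show "r \<odot>\<^bsub>M\<^esub> x \<in> msum P Q" unfolding msum_def using pq r Pc(4) Qc(4) by blast
qed

lemma msum_left: "submodule Q R M \<Longrightarrow> P \<subseteq> carrier M \<Longrightarrow> P \<subseteq> msum P Q"
proof
  fix x assume Q: "submodule Q R M" and P: "P \<subseteq> carrier M" and x: "x \<in> P"
  have "x = x \<oplus>\<^bsub>M\<^esub> \<zero>\<^bsub>M\<^esub>" using x P by auto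
  then show "x \<in> msum P Q" unfolding msum_def using x submoduleD(2)[OF Q] by blast
qed

lemma msum_right: "submodule P R M \<Longrightarrow> Q \<subseteq> carrier M \<Longrightarrow> Q \<subseteq> msum P Q"
proof
  fix x assume P: "submodule P R M" and Q: "Q \<subseteq> carrier M" and x: "x \<in> Q"
  have "x = \<zero>\<^bsub>M\<^esub> \<oplus>\<^bsub>M\<^esub> x" using x Q by auto
  then show "x \<in> msum P Q" unfolding msum_def using x submoduleD(2)[OF P] by blast
qed

lemma msum_le: "P \<subseteq> N \<Longrightarrow> Q \<subseteq> N \<Longrightarrow> submodule N R M \<Longrightarrow> msum P Q \<subseteq> N"
  unfolding msum_def using submoduleD(3)[of N] by blast

lemma smult_image_submodule:
  assumes P: "submodule P R M" and a: "a \<in> carrier R"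
  shows "submodule {a \<odot>\<^bsub>M\<^esub> p | p. p \<in> P} R M"
proof (rule submoduleI2)
  note Pc = submoduleD[OF P]
  show "{a \<odot>\<^bsub>M\<^esub> p | p. p \<in> P} \<subseteq> carrier M" using Pc(1) a by auto
  have "\<zero>\<^bsub>M\<^esub> = a \<odot>\<^bsub>M\<^esub> \<zero>\<^bsub>M\<^esub>" using a by simp
  then show "\<zero>\<^bsub>M\<^esub> \<in> {a \<odot>\<^bsub>M\<^esub> p | p. p \<in> P}" using Pc(2) by blast
  fix x y assume "x \<in> {a \<odot>\<^bsub>M\<^esub> p | p. p \<in> P}"
  then obtain p where p: "p \<in> P" "x = a \<odot>\<^bsub>M\<^esub> p" by blast
  { assume "y \<in> {a \<odot>\<^bsub>M\<^esub> p | p. p \<in> P}"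
    then obtain q where q: "q \<in> P" "y = a \<odot>\<^bsub>M\<^esub> q" by blast
    have c: "p \<in> carrier M" "q \<in> carrier M" using p q Pc(1) by auto
    have "x \<oplus>\<^bsub>M\<^esub> y = a \<odot>\<^bsub>M\<^esub> (p \<oplus>\<^bsub>M\<^esub> q)" unfolding p(2) q(2) using c a by (simp add: smult_r_distr)
    then show "x \<oplus>\<^bsub>M\<^esub> y \<in> {a \<odot>\<^bsub>M\<^esub> p | p. p \<in> P}" using p q Pc(3) by blast }
  fix r assume r: "r \<in> carrier R"
  have c: "p \<in> carrier M" using p Pc(1) by auto
  have "r \<odot>\<^bsub>M\<^esub> x = (r \<otimes> a) \<odot>\<^bsub>M\<^esub> p" unfolding p(2) using c r a by (simp add: smult_assoc1)
  also have "\<dots> = (a \<otimes> r) \<odot>\<^bsub>M\<^esub> p" using r a m_comm by simp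
  also have "\<dots> = a \<odot>\<^bsub>M\<^esub> (r \<odot>\<^bsub>M\<^esub> p)" using c r a by (simp add: smult_assoc1)
  finally have "r \<odot>\<^bsub>M\<^esub> x = a \<odot>\<^bsub>M\<^esub> (r \<odot>\<^bsub>M\<^esub> p)" .
  then show "r \<odot>\<^bsub>M\<^esub> x \<in> {a \<odot>\<^bsub>M\<^esub> p | p. p \<in> P}" using p r Pc(4) by blast
qed

lemma submodule_cancel:
  assumes L: "submodule L R M" and v: "v \<in> L" and w: "w \<in> carrier M" and vw: "v \<oplus>\<^bsub>M\<^esub> w \<in> L"
  shows "w \<in> L"
proof -
  have vM: "v \<in> carrier M" using v submoduleD(1)[OF L] by auto
  have "(v \<oplus>\<^bsub>M\<^esub> w) \<ominus>\<^bsub>M\<^esub> v = w" using vM w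
    by (metis M.add.m_comm M.add.m_assoc M.r_neg M.r_zero M.add.inv_closed a_minus_def)
  moreover have "(v \<oplus>\<^bsub>M\<^esub> w) \<ominus>\<^bsub>M\<^esub> v \<in> L" using submoduleD(6)[OF L vw v] .
  ultimately show ?thesis by simp
qed

lemma INT_submodule:
  assumes "\<And>n::nat. submodule (f n) R M"
  shows "submodule (\<Inter>n. f n) R M"
proof (rule submoduleI2)
  show "(\<Inter>n. f n) \<subseteq> carrier M" using submoduleD(1)[OF assms[of 0]] by auto
  show "\<zero>\<^bsub>M\<^esub> \<in> (\<Inter>n. f n)" using submoduleD(2)[OF assms] by auto
  show "x \<oplus>\<^bsub>M\<^esub> y \<in> (\<Inter>n. f n)" if "x \<in> (\<Inter>n. f n)" "y \<in> (\<Inter>n. f n)" for x y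
    using that submoduleD(3)[OF assms] by auto
  show "r \<odot>\<^bsub>M\<^esub> x \<in> (\<Inter>n. f n)" if "r \<in> carrier R" "x \<in> (\<Inter>n. f n)" for r x
    using that submoduleD(4)[OF assms] by auto
qed

end

locale setting = nfgmod +
  fixes I
  assumes I: "ideal I R" and IJ: "I \<subseteq> jacobson_radical R"
begin

abbreviation Kp where "Kp P n \<equiv> ideal_smult R M (ideal_power R I n) P"

lemma IR: "I \<subseteq> carrier R" using I ideal.axioms(1) additive_subgroup.a_subset by blast

lemma IpR: "ideal_power R I n \<subseteq> carrier R" using ideal_power_carrier[OF I] .

lemma Kp_sub: "P \<subseteq> carrier M \<Longrightarrow> submodule (Kp P n) R M"
  by (rule ism_submodule[OF IpR])

lemma Kp_le: "submodule P R M \<Longrightarrow> Kp P n \<subseteq> P"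
  by (rule ism_le[OF IpR])

lemma Kp_0: "submodule P R M \<Longrightarrow> Kp P 0 = P"
  using ism_carrier by simp

lemma Kp_antimono: "P \<subseteq> carrier M \<Longrightarrow> m \<le> n \<Longrightarrow> Kp P n \<subseteq> Kp P m"
  by (rule ism_mono[OF IpR]) (use ideal_power_antimono[OF I, of m n] in auto)

lemma Kp_mono: "P' \<subseteq> carrier M \<Longrightarrow> P \<subseteq> P' \<Longrightarrow> Kp P n \<subseteq> Kp P' n"
  by (rule ism_mono[OF IpR]) auto

lemma Kp_gen: "r \<in> ideal_power R I n \<Longrightarrow> p \<in> P \<Longrightarrow> r \<odot>\<^bsub>M\<^esub> p \<in> Kp P n"
  by (rule ism_gen)


lemma krull:
  assumes P: "submodule P R M"
  shows "(\<Inter>n. Kp P n) = {\<zero>\<^bsub>M\<^esub>}"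
proof -
  note Pc = submoduleD[OF P]
  define N' where "N' = (\<Inter>n. Kp P n)"
  have N'sub: "submodule N' R M" unfolding N'_def by (rule INT_submodule[OF Kp_sub[OF Pc(1)]])
  note N'c = submoduleD[OF N'sub]
  have N'P: "N' \<subseteq> P" unfolding N'_def using Kp_0[OF P] by blast
  define IN where "IN = ideal_smult R M I N'"
  have INsub: "submodule IN R M" unfolding IN_def by (rule ism_submodule[OF IR N'c(1)])
  have INN: "IN \<subseteq> N'" unfolding IN_def by (rule ism_le[OF IR N'sub])
  define F where "F = {L. submodule L R M \<and> L \<subseteq> P \<and> L \<inter> N' = IN}"
  have "IN \<inter> N' = IN" using INN by blast
  then have "IN \<in> F" unfolding F_def using INsub INN N'P by (intro CollectI conjI) (blast+)
  then have "\<exists>L\<in>F. \<forall>X\<in>F. L \<subseteq> X \<longrightarrow> X = L"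
    by (intro maximal_principle) (auto simp: F_def)
  then obtain L where L: "L \<in> F" and Lmax: "\<And>X. X \<in> F \<Longrightarrow> L \<subseteq> X \<Longrightarrow> X = L" by blast
  have Lsub: "submodule L R M" and LP: "L \<subseteq> P" and LN: "L \<inter> N' = IN" using L unfolding F_def by auto
  note Lc = submoduleD[OF Lsub]
  have INL: "IN \<subseteq> L" using LN by auto
  obtain A where A: "A \<subseteq> carrier R" "finite A" "I = Idl A" using finetely_gen[OF I] by auto
  have AI: "A \<subseteq> I" using A genideal_self by auto
  have powA: "\<exists>m::nat. \<forall>p\<in>P. (a [^] m) \<odot>\<^bsub>M\<^esub> p \<in> L" if aA: "a \<in> A" for a
  proof -
    have aI: "a \<in> I" using aA AI by auto
    have aR: "a \<in> carrier R" using aA A by auto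
    define Lc where "Lc = (\<lambda>m::nat. {p \<in> P. (a [^] m) \<odot>\<^bsub>M\<^esub> p \<in> L})"
    have Lcsub: "submodule (Lc m) R M" for m
    proof (rule submoduleI2)
      have amR: "a [^] m \<in> carrier R" using aR by simp
      show "Lc m \<subseteq> carrier M" unfolding Lc_def using Pc(1) by auto
      show "\<zero>\<^bsub>M\<^esub> \<in> Lc m" unfolding Lc_def using Pc(2) Lc(2) amR by simp
      show "x \<oplus>\<^bsub>M\<^esub> y \<in> Lc m" if "x \<in> Lc m" "y \<in> Lc m" for x y
      proof -
        have xy: "x \<in> P" "y \<in> P" "(a [^] m) \<odot>\<^bsub>M\<^esub> x \<in> L" "(a [^] m) \<odot>\<^bsub>M\<^esub> y \<in> L" using that unfolding Lc_def by auto
        have "(a [^] m) \<odot>\<^bsub>M\<^esub> (x \<oplus>\<^bsub>M\<^esub> y) = (a [^] m) \<odot>\<^bsub>M\<^esub> x \<oplus>\<^bsub>M\<^esub> (a [^] m) \<odot>\<^bsub>M\<^esub> y"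
          using xy Pc(1) amR by (simp add: smult_r_distr subsetD)
        then show ?thesis unfolding Lc_def using xy Pc(3) Lc(3) by auto
      qed
      show "r \<odot>\<^bsub>M\<^esub> x \<in> Lc m" if "r \<in> carrier R" "x \<in> Lc m" for r x
      proof -
        have x: "x \<in> P" "(a [^] m) \<odot>\<^bsub>M\<^esub> x \<in> L" using that unfolding Lc_def by auto
        have xM: "x \<in> carrier M" using x Pc(1) by auto
        have "(a [^] m) \<odot>\<^bsub>M\<^esub> (r \<odot>\<^bsub>M\<^esub> x) = ((a [^] m) \<otimes> r) \<odot>\<^bsub>M\<^esub> x" using xM amR that(1) by (simp add: smult_assoc1)
        also have "\<dots> = (r \<otimes> (a [^] m)) \<odot>\<^bsub>M\<^esub> x" using amR that(1) m_comm by simp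
        also have "\<dots> = r \<odot>\<^bsub>M\<^esub> ((a [^] m) \<odot>\<^bsub>M\<^esub> x)" using xM amR that(1) by (simp add: smult_assoc1)
        finally show ?thesis unfolding Lc_def using x that(1) Pc(4) Lc(4) by auto
      qed
    qed
    have "\<exists>X\<in>range Lc. \<forall>Y\<in>range Lc. X \<subseteq> Y \<longrightarrow> Y = X"
      by (intro maximal_principle) (use Lcsub in auto)
    then obtain m0 where m0: "\<And>X. X \<in> range Lc \<Longrightarrow> Lc m0 \<subseteq> X \<Longrightarrow> X = Lc m0" by blast
    have "Lc m0 \<subseteq> Lc (Suc m0)"
    proof
      fix p assume "p \<in> Lc m0"
      then have p: "p \<in> P" "(a [^] m0) \<odot>\<^bsub>M\<^esub> p \<in> L" unfolding Lc_def by auto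
      have pM: "p \<in> carrier M" using p Pc(1) by auto
      have "(a [^] Suc m0) \<odot>\<^bsub>M\<^esub> p = a \<odot>\<^bsub>M\<^esub> ((a [^] m0) \<odot>\<^bsub>M\<^esub> p)"
        unfolding nat_pow_Suc2[OF aR] using pM aR by (simp add: smult_assoc1)
      then show "p \<in> Lc (Suc m0)" unfolding Lc_def using p Lc(4) aR by auto
    qed
    then have LcS: "Lc (Suc m0) = Lc m0" using m0 by blast
    define AP where "AP = {(a [^] m0) \<odot>\<^bsub>M\<^esub> p | p. p \<in> P}"
    have APsub: "submodule AP R M" unfolding AP_def by (rule smult_image_submodule[OF P]) (use aR in simp)
    define L' where "L' = msum L AP"
    have L'sub: "submodule L' R M" unfolding L'_def by (rule msum_submodule[OF Lsub APsub])
    have LL': "L \<subseteq> L'" unfolding L'_def by (rule msum_left[OF APsub Lc(1)])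
    have APP: "AP \<subseteq> P" unfolding AP_def using Pc(4) aR by auto
    have L'P: "L' \<subseteq> P" unfolding L'_def by (rule msum_le[OF LP APP P])
    have "L' \<inter> N' = IN"
    proof
      show "IN \<subseteq> L' \<inter> N'" using INL LL' INN by auto
      show "L' \<inter> N' \<subseteq> IN"
      proof
        fix y assume y: "y \<in> L' \<inter> N'"
        then obtain l q where lq: "l \<in> L" "q \<in> AP" "y = l \<oplus>\<^bsub>M\<^esub> q" unfolding L'_def msum_def by blast
        then obtain p where p: "p \<in> P" "q = (a [^] m0) \<odot>\<^bsub>M\<^esub> p" unfolding AP_def by blast
        have lM: "l \<in> carrier M" and pM: "p \<in> carrier M" using lq p Lc(1) Pc(1) by auto
        have "a \<odot>\<^bsub>M\<^esub> y \<in> IN" unfolding IN_def using ism_gen[OF aI] y by auto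
        then have ay: "a \<odot>\<^bsub>M\<^esub> y \<in> L" using INL by auto
        have "a \<odot>\<^bsub>M\<^esub> y = a \<odot>\<^bsub>M\<^esub> l \<oplus>\<^bsub>M\<^esub> (a [^] Suc m0) \<odot>\<^bsub>M\<^esub> p"
          unfolding lq(3) p(2) nat_pow_Suc2[OF aR] using lM pM aR by (simp add: smult_r_distr smult_assoc1)
        then have "(a [^] Suc m0) \<odot>\<^bsub>M\<^esub> p \<in> L"
          using submodule_cancel[OF Lsub, of "a \<odot>\<^bsub>M\<^esub> l" "(a [^] Suc m0) \<odot>\<^bsub>M\<^esub> p"] ay Lc(4)[OF aR lq(1)] pM aR by auto
        then have "p \<in> Lc (Suc m0)" unfolding Lc_def using p by auto
        then have "q \<in> L" using LcS p unfolding Lc_def by auto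
        then have "y \<in> L" using lq Lc(3) by auto
        then show "y \<in> IN" using y LN by auto
      qed
    qed
    then have "L' \<in> F" unfolding F_def using L'sub L'P by auto
    then have L'L: "L' = L" using Lmax LL' by auto
    have "\<forall>p\<in>P. (a [^] m0) \<odot>\<^bsub>M\<^esub> p \<in> L"
    proof
      fix p assume p: "p \<in> P"
      have "(a [^] m0) \<odot>\<^bsub>M\<^esub> p \<in> AP" unfolding AP_def using p by blast
      then have "(a [^] m0) \<odot>\<^bsub>M\<^esub> p \<in> L'" using msum_right[OF Lsub] submoduleD(1)[OF APsub] unfolding L'_def by blast
      then show "(a [^] m0) \<odot>\<^bsub>M\<^esub> p \<in> L" using L'L by simp
    qed
    then show ?thesis by blast
  qed
  define Q where "Q = {r \<in> carrier R. \<forall>p\<in>P. r \<odot>\<^bsub>M\<^esub> p \<in> L}"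
  have Qid: "ideal Q R"
  proof (rule idealI2)
    show "Q \<subseteq> carrier R" unfolding Q_def by auto
    show "\<zero> \<in> Q" unfolding Q_def using Pc(1) Lc(2) by auto
    show "x \<oplus> y \<in> Q" if "x \<in> Q" "y \<in> Q" for x y
      using that Pc(1) Lc(3) unfolding Q_def by (auto simp: smult_l_distr subsetD)
    show "r \<otimes> x \<in> Q" if "r \<in> carrier R" "x \<in> Q" for r x
      using that Pc(1) Lc(4) unfolding Q_def by (auto simp: smult_assoc1 subsetD)
  qed
  have "\<exists>m::nat. a [^] m \<in> Q" if "a \<in> A" for a
    using powA[OF that] that A(1) unfolding Q_def by auto
  then obtain k where k: "ideal_power R (Idl A) k \<subseteq> Q" using power_in_ideal[OF A(2) A(1) Qid] by blast
  have "Kp P k \<subseteq> L"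
  proof (rule ism_min[OF Lsub])
    fix r p assume "r \<in> ideal_power R I k" "p \<in> P"
    then show "r \<odot>\<^bsub>M\<^esub> p \<in> L" using k A(3) unfolding Q_def by auto
  qed
  then have "N' \<subseteq> L" unfolding N'_def by blast
  then have "N' = IN" using LN by auto
  then have N'IN: "N' \<subseteq> ideal_smult R M I N'" unfolding IN_def by simp
  obtain T where T: "finite T" "T \<subseteq> N'" "N' = mod_span R M T" using all_fg[OF N'sub] by auto
  have "mod_span R M T = {\<zero>\<^bsub>M\<^esub>}"
    by (rule nakayama[OF I IJ T(1)]) (use T N'c(1) N'IN in auto)
  then show ?thesis using T(3) unfolding N'_def by simp
qed

end

context fmod begin

lemma minus_chain:
  assumes "z \<in> carrier M" "x \<in> carrier M" "y \<in> carrier M"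
  shows "(z \<ominus>\<^bsub>M\<^esub> x) \<oplus>\<^bsub>M\<^esub> (x \<ominus>\<^bsub>M\<^esub> y) = z \<ominus>\<^bsub>M\<^esub> y"
proof -
  have "(z \<ominus>\<^bsub>M\<^esub> x) \<oplus>\<^bsub>M\<^esub> (x \<ominus>\<^bsub>M\<^esub> y) = z \<oplus>\<^bsub>M\<^esub> ((\<ominus>\<^bsub>M\<^esub> x \<oplus>\<^bsub>M\<^esub> x) \<oplus>\<^bsub>M\<^esub> \<ominus>\<^bsub>M\<^esub> y)"
    using assms by (simp add: a_minus_def M.a_assoc)
  also have "\<dots> = z \<ominus>\<^bsub>M\<^esub> y" using assms by (simp add: M.l_neg a_minus_def)
  finally show ?thesis .
qed

lemma mem_coset:
  assumes K: "submodule K R M" and x: "x \<in> carrier M" and y: "y \<in> carrier M"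
  shows "y \<in> mcoset M K x \<longleftrightarrow> y \<ominus>\<^bsub>M\<^esub> x \<in> K"
proof
  assume "y \<in> mcoset M K x"
  then obtain k where k: "k \<in> K" "y = x \<oplus>\<^bsub>M\<^esub> k" unfolding mcoset_def by auto
  have kM: "k \<in> carrier M" using k submoduleD(1)[OF K] by auto
  have "y \<ominus>\<^bsub>M\<^esub> x = k" unfolding k(2) using x kM
    by (metis M.add.m_comm M.add.m_assoc M.r_neg M.r_zero M.add.inv_closed a_minus_def)
  then show "y \<ominus>\<^bsub>M\<^esub> x \<in> K" using k by simp
next
  assume "y \<ominus>\<^bsub>M\<^esub> x \<in> K"
  moreover have "y = x \<oplus>\<^bsub>M\<^esub> (y \<ominus>\<^bsub>M\<^esub> x)" using x y
    by (metis M.add.m_comm minus_cancel_lin M.minus_closed)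
  ultimately show "y \<in> mcoset M K x" unfolding mcoset_def by auto
qed

lemma self_coset: "submodule K R M \<Longrightarrow> x \<in> carrier M \<Longrightarrow> x \<in> mcoset M K x"
  using mem_coset[of K x x] submoduleD(2)[of K] by (simp add: M.r_neg a_minus_def)

lemma coset_eq:
  assumes K: "submodule K R M" and x: "x \<in> carrier M" and y: "y \<in> carrier M"
  shows "mcoset M K x = mcoset M K y \<longleftrightarrow> x \<ominus>\<^bsub>M\<^esub> y \<in> K"
proof
  assume "mcoset M K x = mcoset M K y"
  then have "x \<in> mcoset M K y" using self_coset[OF K x] by simp
  then show "x \<ominus>\<^bsub>M\<^esub> y \<in> K" using mem_coset[OF K y x] by simp
next
  assume xy: "x \<ominus>\<^bsub>M\<^esub> y \<in> K"
  note Kc = submoduleD[OF K]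
  have yx: "y \<ominus>\<^bsub>M\<^esub> x \<in> K"
  proof -
    have "y \<ominus>\<^bsub>M\<^esub> x = \<ominus>\<^bsub>M\<^esub> (x \<ominus>\<^bsub>M\<^esub> y)" using x y by (simp add: M.minus_minus a_minus_def M.minus_add M.a_comm)
    then show ?thesis using Kc(5)[OF xy] by simp
  qed
  show "mcoset M K x = mcoset M K y"
  proof
    show "mcoset M K x \<subseteq> mcoset M K y"
    proof
      fix z assume z: "z \<in> mcoset M K x"
      have zM: "z \<in> carrier M" using z Kc(1) x unfolding mcoset_def by auto
      have "z \<ominus>\<^bsub>M\<^esub> x \<in> K" using mem_coset[OF K x zM] z by simp
      then have "(z \<ominus>\<^bsub>M\<^esub> x) \<oplus>\<^bsub>M\<^esub> (x \<ominus>\<^bsub>M\<^esub> y) \<in> K" using Kc(3) xy by auto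
      moreover have "(z \<ominus>\<^bsub>M\<^esub> x) \<oplus>\<^bsub>M\<^esub> (x \<ominus>\<^bsub>M\<^esub> y) = z \<ominus>\<^bsub>M\<^esub> y" using zM x y by (rule minus_chain)
      ultimately show "z \<in> mcoset M K y" using mem_coset[OF K y zM] by simp
    qed
    show "mcoset M K y \<subseteq> mcoset M K x"
    proof
      fix z assume z: "z \<in> mcoset M K y"
      have zM: "z \<in> carrier M" using z Kc(1) y unfolding mcoset_def by auto
      have "z \<ominus>\<^bsub>M\<^esub> y \<in> K" using mem_coset[OF K y zM] z by simp
      then have "(z \<ominus>\<^bsub>M\<^esub> y) \<oplus>\<^bsub>M\<^esub> (y \<ominus>\<^bsub>M\<^esub> x) \<in> K" using Kc(3) yx by auto
      moreover have "(z \<ominus>\<^bsub>M\<^esub> y) \<oplus>\<^bsub>M\<^esub> (y \<ominus>\<^bsub>M\<^esub> x) = z \<ominus>\<^bsub>M\<^esub> x" using zM y x by (rule minus_chain)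
      ultimately show "z \<in> mcoset M K x" using mem_coset[OF K x zM] by simp
    qed
  qed
qed

lemma coset_subset:
  assumes K: "submodule K R M" and K': "submodule K' R M" and KK: "K' \<subseteq> K"
    and x: "x \<in> carrier M" and x': "x' \<in> carrier M"
  shows "mcoset M K' x' \<subseteq> mcoset M K x \<longleftrightarrow> x' \<ominus>\<^bsub>M\<^esub> x \<in> K"
proof
  assume "mcoset M K' x' \<subseteq> mcoset M K x"
  then have "x' \<in> mcoset M K x" using self_coset[OF K' x'] by auto
  then show "x' \<ominus>\<^bsub>M\<^esub> x \<in> K" using mem_coset[OF K x x'] by simp
next
  assume "x' \<ominus>\<^bsub>M\<^esub> x \<in> K"
  then have "mcoset M K x' = mcoset M K x" using coset_eq[OF K x' x] by simp
  moreover have "mcoset M K' x' \<subseteq> mcoset M K x'" unfolding mcoset_def using KK by auto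
  ultimately show "mcoset M K' x' \<subseteq> mcoset M K x" by simp
qed

end

context setting begin

definition surj_lim where
  "surj_lim P \<longleftrightarrow> (\<forall>s. (\<forall>n. s n \<in> P) \<and> (\<forall>n. s (Suc n) \<ominus>\<^bsub>M\<^esub> s n \<in> Kp P n) \<longrightarrow>
      (\<exists>x\<in>P. \<forall>n. x \<ominus>\<^bsub>M\<^esub> s n \<in> Kp P n))"

lemma complete_iff:
  assumes P: "submodule P R M"
  shows "adically_complete R M I P \<longleftrightarrow> surj_lim P"
proof -
  note Pc = submoduleD[OF P]
  have Kc: "submodule (Kp P n) R M" for n by (rule Kp_sub[OF Pc(1)])
  have KS: "Kp P (Suc n) \<subseteq> Kp P n" for n by (rule Kp_antimono[OF Pc(1)]) simp
  have KP: "Kp P n \<subseteq> P" for n by (rule Kp_le[OF P])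
  have canon_in: "adic_canon R M I P x \<in> adic_invlim R M I P" if x: "x \<in> P" for x
  proof -
    have xM: "x \<in> carrier M" using x Pc(1) by auto
    have "x \<ominus>\<^bsub>M\<^esub> x \<in> Kp P n" for n using submoduleD(2)[OF Kc] xM by (simp add: M.r_neg a_minus_def)
    then have "mcoset M (Kp P (Suc n)) x \<subseteq> mcoset M (Kp P n) x" for n
      using coset_subset[OF Kc Kc KS xM xM] by simp
    then show ?thesis unfolding adic_invlim_def adic_canon_def using x by auto
  qed
  have inj: "inj_on (adic_canon R M I P) P"
  proof
    fix x y assume x: "x \<in> P" and y: "y \<in> P" and eq: "adic_canon R M I P x = adic_canon R M I P y"
    have xM: "x \<in> carrier M" and yM: "y \<in> carrier M" using x y Pc(1) by auto
    have "x \<ominus>\<^bsub>M\<^esub> y \<in> Kp P n" for n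
      using fun_cong[OF eq, of n] coset_eq[OF Kc xM yM] unfolding adic_canon_def by simp
    then have "x \<ominus>\<^bsub>M\<^esub> y \<in> (\<Inter>n. Kp P n)" by blast
    then have "x \<ominus>\<^bsub>M\<^esub> y = \<zero>\<^bsub>M\<^esub>" using krull[OF P] by simp
    moreover have "(x \<ominus>\<^bsub>M\<^esub> y) \<oplus>\<^bsub>M\<^esub> y = x" by (rule minus_cancel_lin[OF xM yM])
    ultimately show "x = y" using yM by simp
  qed
  have "adically_complete R M I P \<longleftrightarrow> adic_invlim R M I P \<subseteq> adic_canon R M I P ` P"
    unfolding adically_complete_def bij_betw_def using inj canon_in by auto
  also have "\<dots> \<longleftrightarrow> surj_lim P"
  proof
    assume sub: "adic_invlim R M I P \<subseteq> adic_canon R M I P ` P"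
    show "surj_lim P" unfolding surj_lim_def
    proof (intro allI impI)
      fix s assume s: "(\<forall>n. s n \<in> P) \<and> (\<forall>n. s (Suc n) \<ominus>\<^bsub>M\<^esub> s n \<in> Kp P n)"
      have sM: "s n \<in> carrier M" for n using s Pc(1) by auto
      define c where "c = (\<lambda>n. mcoset M (Kp P n) (s n))"
      have "c \<in> adic_invlim R M I P"
        unfolding adic_invlim_def c_def using s coset_subset[OF Kc Kc KS sM sM] by auto
      then obtain x where x: "x \<in> P" "adic_canon R M I P x = c" using sub by auto
      have xM: "x \<in> carrier M" using x Pc(1) by auto
      have "x \<ominus>\<^bsub>M\<^esub> s n \<in> Kp P n" for n
        using fun_cong[OF x(2), of n] coset_eq[OF Kc xM sM] unfolding adic_canon_def c_def by simp
      then show "\<exists>x\<in>P. \<forall>n. x \<ominus>\<^bsub>M\<^esub> s n \<in> Kp P n" using x by blast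
    qed
  next
    assume sl: "surj_lim P"
    show "adic_invlim R M I P \<subseteq> adic_canon R M I P ` P"
    proof
      fix c assume c: "c \<in> adic_invlim R M I P"
      define s where "s = (\<lambda>n. SOME x. x \<in> P \<and> c n = mcoset M (Kp P n) x)"
      have s: "s n \<in> P \<and> c n = mcoset M (Kp P n) (s n)" for n
      proof -
        have "\<exists>x. x \<in> P \<and> c n = mcoset M (Kp P n) x" using c unfolding adic_invlim_def by blast
        then show ?thesis unfolding s_def by (rule someI_ex)
      qed
      have sM: "s n \<in> carrier M" for n using s Pc(1) by auto
      have "s (Suc n) \<ominus>\<^bsub>M\<^esub> s n \<in> Kp P n" for n
      proof -
        have "c (Suc n) \<subseteq> c n" using c unfolding adic_invlim_def by auto
        then show ?thesis using s[of n] s[of "Suc n"] coset_subset[OF Kc Kc KS sM sM] by simp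
      qed
      then obtain x where x: "x \<in> P" "\<And>n. x \<ominus>\<^bsub>M\<^esub> s n \<in> Kp P n" using sl s unfolding surj_lim_def by blast
      have xM: "x \<in> carrier M" using x Pc(1) by auto
      have "adic_canon R M I P x = c"
      proof
        fix n show "adic_canon R M I P x n = c n"
          using x(2)[of n] coset_eq[OF Kc xM sM] s[of n] unfolding adic_canon_def by simp
      qed
      then show "c \<in> adic_canon R M I P ` P" using x by auto
    qed
  qed
  finally show ?thesis .
qed


lemma Kp_msum:
  assumes P: "submodule P R M" and Q: "submodule Q R M"
  shows "Kp (msum P Q) n \<subseteq> msum (Kp P n) (Kp Q n)"
proof (rule ism_min[OF msum_submodule[OF Kp_sub Kp_sub]])
  show "P \<subseteq> carrier M" "Q \<subseteq> carrier M" using submoduleD(1) P Q by auto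
  fix r x assume r: "r \<in> ideal_power R I n" and x: "x \<in> msum P Q"
  then obtain p q where pq: "p \<in> P" "q \<in> Q" "x = p \<oplus>\<^bsub>M\<^esub> q" unfolding msum_def by blast
  have c: "p \<in> carrier M" "q \<in> carrier M" "r \<in> carrier R" using pq r submoduleD(1) P Q IpR by auto
  have "r \<odot>\<^bsub>M\<^esub> x = r \<odot>\<^bsub>M\<^esub> p \<oplus>\<^bsub>M\<^esub> r \<odot>\<^bsub>M\<^esub> q" unfolding pq(3) using c by (simp add: smult_r_distr)
  then show "r \<odot>\<^bsub>M\<^esub> x \<in> msum (Kp P n) (Kp Q n)" unfolding msum_def using Kp_gen[OF r pq(1)] Kp_gen[OF r pq(2)] by blast
qed

lemma msum_Kp:
  assumes P: "submodule P R M" and Q: "submodule Q R M"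
  shows "msum (Kp P n) (Kp Q n) \<subseteq> Kp (msum P Q) n"
proof -
  have S: "submodule (msum P Q) R M" by (rule msum_submodule[OF P Q])
  have PS: "P \<subseteq> msum P Q" by (rule msum_left[OF Q submoduleD(1)[OF P]])
  have QS: "Q \<subseteq> msum P Q" by (rule msum_right[OF P submoduleD(1)[OF Q]])
  show ?thesis
    by (rule msum_le[OF Kp_mono[OF submoduleD(1)[OF S] PS] Kp_mono[OF submoduleD(1)[OF S] QS] Kp_sub[OF submoduleD(1)[OF S]]])
qed

lemma add_minus_add:
  assumes "x \<in> carrier M" "y \<in> carrier M" "a \<in> carrier M" "b \<in> carrier M"
  shows "(x \<oplus>\<^bsub>M\<^esub> y) \<ominus>\<^bsub>M\<^esub> (a \<oplus>\<^bsub>M\<^esub> b) = (x \<ominus>\<^bsub>M\<^esub> a) \<oplus>\<^bsub>M\<^esub> (y \<ominus>\<^bsub>M\<^esub> b)"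
  using assms by (simp add: a_minus_def M.minus_add M.a_ac)

lemma add_minus_left:
  assumes "a \<in> carrier M" "b \<in> carrier M"
  shows "(a \<oplus>\<^bsub>M\<^esub> b) \<ominus>\<^bsub>M\<^esub> a = b"
  using assms by (metis M.add.m_comm M.add.m_assoc M.r_neg M.r_zero M.add.inv_closed a_minus_def)

lemma surj_lim_msum:
  assumes P: "submodule P R M" and Q: "submodule Q R M" and sP: "surj_lim P" and sQ: "surj_lim Q"
  shows "surj_lim (msum P Q)"
  unfolding surj_lim_def
proof (intro allI impI)
  fix s assume s: "(\<forall>n. s n \<in> msum P Q) \<and> (\<forall>n. s (Suc n) \<ominus>\<^bsub>M\<^esub> s n \<in> Kp (msum P Q) n)"
  note Pc = submoduleD[OF P] and Qc = submoduleD[OF Q]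
  have S: "submodule (msum P Q) R M" by (rule msum_submodule[OF P Q])
  note Sc = submoduleD[OF S]
  have sM: "s n \<in> carrier M" for n using s Sc(1) by auto
  have "\<exists>u v. u \<in> Kp P n \<and> v \<in> Kp Q n \<and> s (Suc n) \<ominus>\<^bsub>M\<^esub> s n = u \<oplus>\<^bsub>M\<^esub> v" for n
    using s Kp_msum[OF P Q, of n] unfolding msum_def by blast
  then obtain u v where uv: "\<And>n. u n \<in> Kp P n" "\<And>n. v n \<in> Kp Q n" "\<And>n. s (Suc n) \<ominus>\<^bsub>M\<^esub> s n = u n \<oplus>\<^bsub>M\<^esub> v n"
    by metis
  have uP: "u n \<in> P" and vQ: "v n \<in> Q" for n using uv Kp_le[OF P] Kp_le[OF Q] by blast+
  obtain p0 q0 where pq0: "p0 \<in> P" "q0 \<in> Q" "s 0 = p0 \<oplus>\<^bsub>M\<^esub> q0" using s unfolding msum_def by blast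
  define sp where "sp = rec_nat p0 (\<lambda>n x. x \<oplus>\<^bsub>M\<^esub> u n)"
  define sq where "sq = rec_nat q0 (\<lambda>n x. x \<oplus>\<^bsub>M\<^esub> v n)"
  have sp0: "sp 0 = p0" and spS: "sp (Suc n) = sp n \<oplus>\<^bsub>M\<^esub> u n" for n unfolding sp_def by simp_all
  have sq0: "sq 0 = q0" and sqS: "sq (Suc n) = sq n \<oplus>\<^bsub>M\<^esub> v n" for n unfolding sq_def by simp_all
  have spP: "sp n \<in> P" for n by (induction n) (use sp0 spS pq0 uP Pc(3) in auto)
  have sqQ: "sq n \<in> Q" for n by (induction n) (use sq0 sqS pq0 vQ Qc(3) in auto)
  have spM: "sp n \<in> carrier M" and sqM: "sq n \<in> carrier M" and uM: "u n \<in> carrier M" and vM: "v n \<in> carrier M" for n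
    using spP sqQ uP vQ Pc(1) Qc(1) by auto
  have sdec: "s n = sp n \<oplus>\<^bsub>M\<^esub> sq n" for n
  proof (induction n)
    case 0 then show ?case using sp0 sq0 pq0 by simp
  next
    case (Suc n)
    have "s (Suc n) = (s (Suc n) \<ominus>\<^bsub>M\<^esub> s n) \<oplus>\<^bsub>M\<^esub> s n" using minus_cancel_lin[OF sM sM] by simp
    also have "\<dots> = (u n \<oplus>\<^bsub>M\<^esub> v n) \<oplus>\<^bsub>M\<^esub> (sp n \<oplus>\<^bsub>M\<^esub> sq n)" by (subst uv(3)) (simp only: Suc)
    also have "\<dots> = sp (Suc n) \<oplus>\<^bsub>M\<^esub> sq (Suc n)" unfolding spS sqS using spM sqM uM vM by (simp add: M.a_ac)
    finally show ?case .
  qed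
  have "sp (Suc n) \<ominus>\<^bsub>M\<^esub> sp n \<in> Kp P n" for n unfolding spS using add_minus_left[OF spM uM] uv(1) by simp
  then obtain x where x: "x \<in> P" "\<And>n. x \<ominus>\<^bsub>M\<^esub> sp n \<in> Kp P n" using sP spP unfolding surj_lim_def by blast
  have "sq (Suc n) \<ominus>\<^bsub>M\<^esub> sq n \<in> Kp Q n" for n unfolding sqS using add_minus_left[OF sqM vM] uv(2) by simp
  then obtain y where y: "y \<in> Q" "\<And>n. y \<ominus>\<^bsub>M\<^esub> sq n \<in> Kp Q n" using sQ sqQ unfolding surj_lim_def by blast
  have xM: "x \<in> carrier M" and yM: "y \<in> carrier M" using x y Pc(1) Qc(1) by auto
  have "x \<oplus>\<^bsub>M\<^esub> y \<in> msum P Q" unfolding msum_def using x y by blast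
  moreover have "(x \<oplus>\<^bsub>M\<^esub> y) \<ominus>\<^bsub>M\<^esub> s n \<in> Kp (msum P Q) n" for n
  proof -
    have "(x \<oplus>\<^bsub>M\<^esub> y) \<ominus>\<^bsub>M\<^esub> s n = (x \<ominus>\<^bsub>M\<^esub> sp n) \<oplus>\<^bsub>M\<^esub> (y \<ominus>\<^bsub>M\<^esub> sq n)"
      unfolding sdec by (rule add_minus_add[OF xM yM spM sqM])
    moreover have "(x \<ominus>\<^bsub>M\<^esub> sp n) \<oplus>\<^bsub>M\<^esub> (y \<ominus>\<^bsub>M\<^esub> sq n) \<in> msum (Kp P n) (Kp Q n)"
      unfolding msum_def using x(2) y(2) by blast
    ultimately show ?thesis using msum_Kp[OF P Q] by auto
  qed
  ultimately show "\<exists>x\<in>msum P Q. \<forall>n. x \<ominus>\<^bsub>M\<^esub> s n \<in> Kp (msum P Q) n" by blast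
qed

lemma surj_lim_zero: "surj_lim {\<zero>\<^bsub>M\<^esub>}"
  unfolding surj_lim_def
proof (intro allI impI)
  fix s assume s: "(\<forall>n. s n \<in> {\<zero>\<^bsub>M\<^esub>}) \<and> (\<forall>n. s (Suc n) \<ominus>\<^bsub>M\<^esub> s n \<in> Kp {\<zero>\<^bsub>M\<^esub>} n)"
  have "\<zero>\<^bsub>M\<^esub> \<ominus>\<^bsub>M\<^esub> s n \<in> Kp {\<zero>\<^bsub>M\<^esub>} n" for n
    using s submoduleD(2)[OF Kp_sub[of "{\<zero>\<^bsub>M\<^esub>}" n]] by (simp add: a_minus_def M.r_neg)
  then show "\<exists>x\<in>{\<zero>\<^bsub>M\<^esub>}. \<forall>n. x \<ominus>\<^bsub>M\<^esub> s n \<in> Kp {\<zero>\<^bsub>M\<^esub>} n" by blast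
qed

lemma C_props:
  shows "submodule (max_complete_submodule R M I) R M"
    and "surj_lim (max_complete_submodule R M I)"
    and "\<And>N. submodule N R M \<Longrightarrow> surj_lim N \<Longrightarrow> N \<subseteq> max_complete_submodule R M I"
proof -
  define F where "F = {N. submodule N R M \<and> adically_complete R M I N}"
  have "{\<zero>\<^bsub>M\<^esub>} \<in> F" unfolding F_def using complete_iff[OF zero_submodule] surj_lim_zero zero_submodule by simp
  then have "\<exists>C\<in>F. \<forall>X\<in>F. C \<subseteq> X \<longrightarrow> X = C" by (intro maximal_principle) (auto simp: F_def)
  then obtain C where C: "C \<in> F" and Cmax: "\<And>X. X \<in> F \<Longrightarrow> C \<subseteq> X \<Longrightarrow> X = C" by blast
  have Csub: "submodule C R M" and Csl: "surj_lim C" using C complete_iff unfolding F_def by auto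
  have big: "N \<subseteq> C" if N: "submodule N R M" "surj_lim N" for N
  proof -
    have S: "submodule (msum C N) R M" by (rule msum_submodule[OF Csub N(1)])
    have "surj_lim (msum C N)" by (rule surj_lim_msum[OF Csub N(1) Csl N(2)])
    then have "msum C N \<in> F" unfolding F_def using S complete_iff[OF S] by simp
    moreover have "C \<subseteq> msum C N" by (rule msum_left[OF N(1) submoduleD(1)[OF Csub]])
    ultimately have "msum C N = C" using Cmax by blast
    then show "N \<subseteq> C" using msum_right[OF Csub submoduleD(1)[OF N(1)]] by simp
  qed
  have "max_complete_submodule R M I = C"
    unfolding max_complete_submodule_def
  proof (rule the_equality)
    show "submodule C R M \<and> adically_complete R M I C \<and>
        (\<forall>N'. submodule N' R M \<and> adically_complete R M I N' \<and> C \<subseteq> N' \<longrightarrow> N' = C)"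
      using C Cmax unfolding F_def by auto
    fix N assume N: "submodule N R M \<and> adically_complete R M I N \<and>
        (\<forall>N'. submodule N' R M \<and> adically_complete R M I N' \<and> N \<subseteq> N' \<longrightarrow> N' = N)"
    then have "N \<subseteq> C" using big complete_iff by auto
    then show "N = C" using N C unfolding F_def by auto
  qed
  then show "submodule (max_complete_submodule R M I) R M" "surj_lim (max_complete_submodule R M I)"
    "\<And>N. submodule N R M \<Longrightarrow> surj_lim N \<Longrightarrow> N \<subseteq> max_complete_submodule R M I"
    using Csub Csl big by auto
qed

end

context cring begin

lemma ring_module_simps:
  "carrier (ring_module R) = carrier R"
  "add (ring_module R) = add R"
  "zero (ring_module R) = zero R"
  "smult (ring_module R) = monoid.mult R"
  by (simp_all add: ring_module_def)

lemma ring_module_a_inv: "a_inv (ring_module R) = a_inv R"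
  unfolding a_inv_def m_inv_def[abs_def] by (simp add: ring_module_def)

lemma ring_module_a_minus: "a_minus (ring_module R) = a_minus R"
  unfolding a_minus_def[abs_def] using ring_module_a_inv ring_module_simps by simp

lemma ring_module_module: "module R (ring_module R)"
proof (rule moduleI)
  show "cring R" by (rule is_cring)
  show "abelian_group (ring_module R)"
    by (rule abelian_groupI) (auto simp: ring_module_simps a_ac intro: l_neg)
qed (simp_all add: ring_module_simps l_distr r_distr m_assoc)

end

context cring begin

lemma coset_add_set:
  assumes K: "ideal K R" and a: "a \<in> carrier R" and b: "b \<in> carrier R"
  shows "{u \<oplus> v | u v. u \<in> (\<lambda>y. a \<oplus> y) ` K \<and> v \<in> (\<lambda>y. b \<oplus> y) ` K} = (\<lambda>y. (a \<oplus> b) \<oplus> y) ` K"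
proof -
  have KR: "K \<subseteq> carrier R" using additive_subgroup.a_subset[OF ideal.axioms(1)[OF K]] .
  have K0: "\<zero> \<in> K" using additive_subgroup.zero_closed[OF ideal.axioms(1)[OF K]] .
  have Ka: "i \<oplus> j \<in> K" if "i \<in> K" "j \<in> K" for i j using additive_subgroup.a_closed[OF ideal.axioms(1)[OF K] that] .
  show ?thesis
  proof
    show "{u \<oplus> v | u v. u \<in> (\<lambda>y. a \<oplus> y) ` K \<and> v \<in> (\<lambda>y. b \<oplus> y) ` K} \<subseteq> (\<lambda>y. (a \<oplus> b) \<oplus> y) ` K"
    proof
      fix z assume "z \<in> {u \<oplus> v | u v. u \<in> (\<lambda>y. a \<oplus> y) ` K \<and> v \<in> (\<lambda>y. b \<oplus> y) ` K}"
      then obtain i j where ij: "i \<in> K" "j \<in> K" "z = (a \<oplus> i) \<oplus> (b \<oplus> j)" by blast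
      have "z = (a \<oplus> b) \<oplus> (i \<oplus> j)" using ij a b KR by (simp add: a_ac subsetD)
      then show "z \<in> (\<lambda>y. (a \<oplus> b) \<oplus> y) ` K" using Ka[OF ij(1,2)] by blast
    qed
    show "(\<lambda>y. (a \<oplus> b) \<oplus> y) ` K \<subseteq> {u \<oplus> v | u v. u \<in> (\<lambda>y. a \<oplus> y) ` K \<and> v \<in> (\<lambda>y. b \<oplus> y) ` K}"
    proof
      fix z assume "z \<in> (\<lambda>y. (a \<oplus> b) \<oplus> y) ` K"
      then obtain i where i: "i \<in> K" "z = (a \<oplus> b) \<oplus> i" by blast
      have "z = (a \<oplus> i) \<oplus> (b \<oplus> \<zero>)" using i a b KR by (simp add: a_ac subsetD)
      then show "z \<in> {u \<oplus> v | u v. u \<in> (\<lambda>y. a \<oplus> y) ` K \<and> v \<in> (\<lambda>y. b \<oplus> y) ` K}"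
        using i K0 by blast
    qed
  qed
qed

lemma coset_smult_set:
  assumes K: "ideal K R" and a: "a \<in> carrier R" and r: "r \<in> carrier R"
  shows "{r \<otimes> u \<oplus> v | u v. u \<in> (\<lambda>y. a \<oplus> y) ` K \<and> v \<in> K} = (\<lambda>y. (r \<otimes> a) \<oplus> y) ` K"
proof -
  have KR: "K \<subseteq> carrier R" using additive_subgroup.a_subset[OF ideal.axioms(1)[OF K]] .
  have K0: "\<zero> \<in> K" using additive_subgroup.zero_closed[OF ideal.axioms(1)[OF K]] .
  have Ka: "i \<oplus> j \<in> K" if "i \<in> K" "j \<in> K" for i j using additive_subgroup.a_closed[OF ideal.axioms(1)[OF K] that] .
  show ?thesis
  proof
    show "{r \<otimes> u \<oplus> v | u v. u \<in> (\<lambda>y. a \<oplus> y) ` K \<and> v \<in> K} \<subseteq> (\<lambda>y. (r \<otimes> a) \<oplus> y) ` K"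
    proof
      fix z assume "z \<in> {r \<otimes> u \<oplus> v | u v. u \<in> (\<lambda>y. a \<oplus> y) ` K \<and> v \<in> K}"
      then obtain i j where ij: "i \<in> K" "j \<in> K" "z = r \<otimes> (a \<oplus> i) \<oplus> j" by blast
      have iR: "i \<in> carrier R" "j \<in> carrier R" using ij KR by auto
      have "z = (r \<otimes> a) \<oplus> (r \<otimes> i \<oplus> j)" using ij(3) iR a r by (simp add: r_distr a_assoc)
      moreover have "r \<otimes> i \<oplus> j \<in> K" using Ka ideal.I_l_closed[OF K ij(1) r] ij(2) by blast
      ultimately show "z \<in> (\<lambda>y. (r \<otimes> a) \<oplus> y) ` K" by blast
    qed
    show "(\<lambda>y. (r \<otimes> a) \<oplus> y) ` K \<subseteq> {r \<otimes> u \<oplus> v | u v. u \<in> (\<lambda>y. a \<oplus> y) ` K \<and> v \<in> K}"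
    proof
      fix z assume "z \<in> (\<lambda>y. (r \<otimes> a) \<oplus> y) ` K"
      then obtain i where i: "i \<in> K" "z = (r \<otimes> a) \<oplus> i" by blast
      have "a = a \<oplus> \<zero>" using a by simp
      then have "a \<in> (\<lambda>y. a \<oplus> y) ` K" using K0 by blast
      then show "z \<in> {r \<otimes> u \<oplus> v | u v. u \<in> (\<lambda>y. a \<oplus> y) ` K \<and> v \<in> K}" using i by blast
    qed
  qed
qed

end

lemma fmod_ring_module: "cring R \<Longrightarrow> fmod R (ring_module R)"
  unfolding fmod_def using cring.ring_module_module by blast

context setting begin

abbreviation IP where "IP n \<equiv> ideal_power R I n"
abbreviation H where "H \<equiv> ring_completion R I"

lemma IPid: "ideal (IP n) R" by (rule ideal_power_ideal[OF I])

interpretation RM: fmod R "ring_module R" by (rule fmod_ring_module[OF is_cring])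

lemma IP_submodule: "submodule (IP n) R (ring_module R)"
  by (rule RM.submoduleI2) (use IPid[of n] in \<open>auto simp: ring_module_simps ideal.axioms(1) additive_subgroup.a_subset additive_subgroup.zero_closed additive_subgroup.a_closed ideal.I_l_closed\<close>)

lemma K_eq: "ideal_smult R (ring_module R) (IP n) (carrier (ring_module R)) = IP n"
proof
  show "ideal_smult R (ring_module R) (IP n) (carrier (ring_module R)) \<subseteq> IP n"
    by (rule RM.ism_min[OF IP_submodule]) (use IPid[of n] in \<open>auto simp: ring_module_simps ideal.I_r_closed\<close>)
  show "IP n \<subseteq> ideal_smult R (ring_module R) (IP n) (carrier (ring_module R))"
  proof
    fix r assume r: "r \<in> IP n"
    have rR: "r \<in> carrier R" using r IpR by auto
    have "r \<odot>\<^bsub>ring_module R\<^esub> \<one> \<in> ideal_smult R (ring_module R) (IP n) (carrier (ring_module R))"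
      by (rule RM.ism_gen[OF r]) (simp add: ring_module_simps)
    then show "r \<in> ideal_smult R (ring_module R) (IP n) (carrier (ring_module R))" using rR by (simp add: ring_module_simps)
  qed
qed

lemma mcoset_R: "mcoset (ring_module R) K a = (\<lambda>y. a \<oplus> y) ` K"
  unfolding mcoset_def by (simp add: ring_module_simps)

lemma mem_coset_R: "x \<in> carrier R \<Longrightarrow> y \<in> carrier R \<Longrightarrow> y \<in> mcoset (ring_module R) (IP k) x \<longleftrightarrow> y \<ominus> x \<in> IP k"
  using RM.mem_coset[OF IP_submodule, of x y] by (simp add: ring_module_simps ring_module_a_minus)

lemma coset_eq_R: "x \<in> carrier R \<Longrightarrow> y \<in> carrier R \<Longrightarrow>
    mcoset (ring_module R) (IP k) x = mcoset (ring_module R) (IP k) y \<longleftrightarrow> x \<ominus> y \<in> IP k"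
  using RM.coset_eq[OF IP_submodule, of x y] by (simp add: ring_module_simps ring_module_a_minus)

lemma coset_subset_R: "x \<in> carrier R \<Longrightarrow> x' \<in> carrier R \<Longrightarrow>
    mcoset (ring_module R) (IP (Suc k)) x' \<subseteq> mcoset (ring_module R) (IP k) x \<longleftrightarrow> x' \<ominus> x \<in> IP k"
  using RM.coset_subset[OF IP_submodule IP_submodule ideal_power_Suc_le[OF I], of x x'] by (simp add: ring_module_simps ring_module_a_minus)

definition rep where "rep x \<longleftrightarrow> (\<forall>k. x k \<in> carrier R) \<and> (\<forall>k. x (Suc k) \<ominus> x k \<in> IP k)"
definition elt where "elt x = (\<lambda>k. mcoset (ring_module R) (IP k) (x k))"

lemma carrier_H: "carrier H = {c. (\<forall>n. \<exists>x\<in>carrier R. c n = mcoset (ring_module R) (IP n) x) \<and> (\<forall>n. c (Suc n) \<subseteq> c n)}"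
  unfolding ring_completion_def adic_completion_def adic_invlim_def Let_def using K_eq by (simp add: ring_module_simps)

lemma add_H: "x \<oplus>\<^bsub>H\<^esub> y = (\<lambda>n. {u \<oplus> v | u v. u \<in> x n \<and> v \<in> y n})"
  unfolding ring_completion_def adic_completion_def Let_def by (simp add: ring_module_simps)

lemma smult_H: "r \<odot>\<^bsub>H\<^esub> x = (\<lambda>n. {r \<otimes> u \<oplus> v | u v. u \<in> x n \<and> v \<in> IP n})"
  unfolding ring_completion_def adic_completion_def Let_def using K_eq by (simp add: ring_module_simps)

lemma elt_in: "rep x \<Longrightarrow> elt x \<in> carrier H"
  unfolding carrier_H elt_def rep_def using coset_subset_R by auto

lemma elt_surj:
  assumes c: "c \<in> carrier H"
  shows "\<exists>x. rep x \<and> c = elt x"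
proof -
  define x where "x = (\<lambda>n. SOME a. a \<in> carrier R \<and> c n = mcoset (ring_module R) (IP n) a)"
  have x: "x n \<in> carrier R \<and> c n = mcoset (ring_module R) (IP n) (x n)" for n
  proof -
    have "\<exists>a. a \<in> carrier R \<and> c n = mcoset (ring_module R) (IP n) a" using c unfolding carrier_H by blast
    then show ?thesis unfolding x_def by (rule someI_ex)
  qed
  have "c (Suc n) \<subseteq> c n" for n using c unfolding carrier_H by blast
  then have "x (Suc n) \<ominus> x n \<in> IP n" for n using x[of n] x[of "Suc n"] coset_subset_R by metis
  then have "rep x" unfolding rep_def using x by auto
  moreover have "c = elt x" unfolding elt_def using x by auto
  ultimately show ?thesis by blast
qed

lemma elt_eq: "(\<And>k. x k \<in> carrier R) \<Longrightarrow> (\<And>k. y k \<in> carrier R) \<Longrightarrow> elt x = elt y \<longleftrightarrow> (\<forall>k. x k \<ominus> y k \<in> IP k)"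
  unfolding elt_def using coset_eq_R by (metis (mono_tags, lifting))

lemma elt_add: "(\<And>k. x k \<in> carrier R) \<Longrightarrow> (\<And>k. y k \<in> carrier R) \<Longrightarrow> elt x \<oplus>\<^bsub>H\<^esub> elt y = elt (\<lambda>k. x k \<oplus> y k)"
  unfolding add_H elt_def mcoset_R using coset_add_set[OF IPid] by auto

lemma elt_smult: "r \<in> carrier R \<Longrightarrow> (\<And>k. x k \<in> carrier R) \<Longrightarrow> r \<odot>\<^bsub>H\<^esub> elt x = elt (\<lambda>k. r \<otimes> x k)"
  unfolding smult_H elt_def mcoset_R using coset_smult_set[OF IPid] by auto

end

context cring begin

definition lcomb where "lcomb G y = (\<Oplus>g\<in>G. g \<otimes> y g)"

lemma lcomb_closed: "finite G \<Longrightarrow> G \<subseteq> carrier R \<Longrightarrow> (\<And>g. g \<in> G \<Longrightarrow> y g \<in> carrier R) \<Longrightarrow> lcomb G y \<in> carrier R"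
  unfolding lcomb_def by (rule finsum_closed) auto

lemma lcomb_add:
  assumes "finite G" "G \<subseteq> carrier R" "\<And>g. g \<in> G \<Longrightarrow> y g \<in> carrier R" "\<And>g. g \<in> G \<Longrightarrow> z g \<in> carrier R"
  shows "lcomb G y \<oplus> lcomb G z = lcomb G (\<lambda>g. y g \<oplus> z g)"
proof -
  have "lcomb G (\<lambda>g. y g \<oplus> z g) = (\<Oplus>g\<in>G. g \<otimes> y g \<oplus> g \<otimes> z g)"
    unfolding lcomb_def by (rule finsum_cong') (use assms in \<open>auto simp: r_distr\<close>)
  also have "\<dots> = lcomb G y \<oplus> lcomb G z" unfolding lcomb_def by (rule finsum_addf) (use assms in auto)
  finally show ?thesis by simp
qed

lemma lcomb_smult:
  assumes "finite G" "G \<subseteq> carrier R" "\<And>g. g \<in> G \<Longrightarrow> y g \<in> carrier R" "r \<in> carrier R"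
  shows "r \<otimes> lcomb G y = lcomb G (\<lambda>g. r \<otimes> y g)"
proof -
  have "r \<otimes> lcomb G y = (\<Oplus>g\<in>G. r \<otimes> (g \<otimes> y g))" unfolding lcomb_def by (rule finsum_rdistr) (use assms in auto)
  also have "\<dots> = lcomb G (\<lambda>g. r \<otimes> y g)"
    unfolding lcomb_def by (rule finsum_cong') (use assms in \<open>auto simp: m_lcomm\<close>)
  finally show ?thesis .
qed

lemma lcomb_rmult:
  assumes "finite G" "G \<subseteq> carrier R" "\<And>g. g \<in> G \<Longrightarrow> y g \<in> carrier R" "r \<in> carrier R"
  shows "lcomb G y \<otimes> r = lcomb G (\<lambda>g. y g \<otimes> r)"
proof -
  have c: "lcomb G y \<in> carrier R" by (rule lcomb_closed[OF assms(1-3)])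
  have "lcomb G y \<otimes> r = r \<otimes> lcomb G y" by (rule m_comm[OF c assms(4)])
  also have "\<dots> = lcomb G (\<lambda>g. r \<otimes> y g)" by (rule lcomb_smult[OF assms])
  also have "\<dots> = lcomb G (\<lambda>g. y g \<otimes> r)"
  proof -
    have "\<And>g. g \<in> G \<Longrightarrow> r \<otimes> y g = y g \<otimes> r" using assms m_comm by blast
    then show ?thesis unfolding lcomb_def by (intro finsum_cong') (use assms in auto)
  qed
  finally show ?thesis .
qed

lemma Idl_lcomb:
  assumes G: "finite G" "G \<subseteq> carrier R" and z: "z \<in> Idl G"
  shows "\<exists>a. (\<forall>g\<in>G. a g \<in> carrier R) \<and> z = lcomb G a"
proof -
  define T where "T = {z. \<exists>a. (\<forall>g\<in>G. a g \<in> carrier R) \<and> z = lcomb G a}"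
  have "ideal T R"
  proof (rule idealI2)
    show "T \<subseteq> carrier R" unfolding T_def using lcomb_closed[OF G] by auto
    have "lcomb G (\<lambda>g. \<zero>) = (\<Oplus>g\<in>G. \<zero>)" unfolding lcomb_def by (rule finsum_cong') (use G in auto)
    then have "lcomb G (\<lambda>g. \<zero>) = \<zero>" by simp
    then show "\<zero> \<in> T" unfolding T_def by (intro CollectI exI[of _ "\<lambda>g. \<zero>"]) auto
    fix x y assume x: "x \<in> T"
    then obtain a where a: "\<forall>g\<in>G. a g \<in> carrier R" "x = lcomb G a" unfolding T_def by blast
    { assume "y \<in> T"
      then obtain b where b: "\<forall>g\<in>G. b g \<in> carrier R" "y = lcomb G b" unfolding T_def by blast
      have "x \<oplus> y = lcomb G (\<lambda>g. a g \<oplus> b g)" using lcomb_add[OF G] a b by auto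
      then show "x \<oplus> y \<in> T" unfolding T_def using a b by (intro CollectI exI[of _ "\<lambda>g. a g \<oplus> b g"]) auto }
    fix r assume r: "r \<in> carrier R"
    have "r \<otimes> x = lcomb G (\<lambda>g. r \<otimes> a g)" using lcomb_smult[OF G] a r by auto
    then show "r \<otimes> x \<in> T" unfolding T_def using a r by (intro CollectI exI[of _ "\<lambda>g. r \<otimes> a g"]) auto
  qed
  moreover have "G \<subseteq> T"
  proof
    fix g0 assume g0: "g0 \<in> G"
    have "lcomb G (\<lambda>g. if g0 = g then \<one> else \<zero>) = (\<Oplus>g\<in>G. if g0 = g then g else \<zero>)"
      unfolding lcomb_def by (rule finsum_cong') (use G in auto)
    also have "\<dots> = g0" by (rule finsum_singleton[OF g0 G(1)]) (use G in auto)
    finally show "g0 \<in> T" unfolding T_def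
      by (intro CollectI exI[of _ "\<lambda>g. if g0 = g then \<one> else \<zero>"]) auto
  qed
  ultimately have "Idl G \<subseteq> T" by (rule genideal_minimal)
  then show ?thesis using z unfolding T_def by blast
qed

lemma ideal_prod_lcomb:
  assumes G: "finite G" "G \<subseteq> carrier R" and J: "ideal J R" and z: "z \<in> ideal_prod R (Idl G) J"
  shows "\<exists>y. (\<forall>g\<in>G. y g \<in> J) \<and> z = lcomb G y"
  using z
proof (induction rule: ideal_prod.induct)
  case (prod i j)
  obtain a where a: "\<forall>g\<in>G. a g \<in> carrier R" "i = lcomb G a" using Idl_lcomb[OF G prod(1)] by blast
  have jR: "j \<in> carrier R" using prod(2) J additive_subgroup.a_subset[OF ideal.axioms(1)[OF J]] by auto
  have "i \<otimes> j = lcomb G (\<lambda>g. a g \<otimes> j)" using lcomb_rmult[OF G] a jR by auto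
  moreover have "\<forall>g\<in>G. a g \<otimes> j \<in> J" using a(1) ideal.I_l_closed[OF J prod(2)] by auto
  ultimately show ?case by (intro exI[of _ "\<lambda>g. a g \<otimes> j"]) simp
next
  case (sum s1 s2)
  obtain y1 where y1: "\<forall>g\<in>G. y1 g \<in> J" "s1 = lcomb G y1" using sum.IH(1) by blast
  obtain y2 where y2: "\<forall>g\<in>G. y2 g \<in> J" "s2 = lcomb G y2" using sum.IH(2) by blast
  have JR: "J \<subseteq> carrier R" using additive_subgroup.a_subset[OF ideal.axioms(1)[OF J]] .
  have "s1 \<oplus> s2 = lcomb G (\<lambda>g. y1 g \<oplus> y2 g)" unfolding y1(2) y2(2) by (rule lcomb_add[OF G]) (use y1 y2 JR in auto)
  moreover have "\<forall>g\<in>G. y1 g \<oplus> y2 g \<in> J" using y1 y2 additive_subgroup.a_closed[OF ideal.axioms(1)[OF J]] by auto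
  ultimately show ?case by (intro exI[of _ "\<lambda>g. y1 g \<oplus> y2 g"]) simp
qed

end


lemma (in cring) minus_chain_R:
  assumes "a \<in> carrier R" "b \<in> carrier R" "c \<in> carrier R"
  shows "(a \<ominus> b) \<oplus> (b \<ominus> c) = a \<ominus> c"
proof -
  have "(a \<ominus> b) \<oplus> (b \<ominus> c) = a \<oplus> ((\<ominus> b \<oplus> b) \<oplus> \<ominus> c)"
    using assms by (simp add: a_minus_def a_assoc)
  also have "\<dots> = a \<ominus> c" using assms by (simp add: l_neg a_minus_def)
  finally show ?thesis .
qed

lemma (in cring) add_minus_add_R:
  assumes "x \<in> carrier R" "y \<in> carrier R" "a \<in> carrier R" "b \<in> carrier R"
  shows "(x \<oplus> y) \<ominus> (a \<oplus> b) = (x \<ominus> a) \<oplus> (y \<ominus> b)"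
  using assms by (simp add: a_minus_def minus_add a_ac)

context setting begin

lemma IP_R: "IP n \<subseteq> carrier R" by (rule IpR)

lemma IP_add: "a \<in> IP n \<Longrightarrow> b \<in> IP n \<Longrightarrow> a \<oplus> b \<in> IP n"
  using additive_subgroup.a_closed[OF ideal.axioms(1)[OF IPid]] .

lemma IP_neg: "a \<in> IP n \<Longrightarrow> \<ominus> a \<in> IP n"
  using additive_subgroup.a_inv_closed[OF ideal.axioms(1)[OF IPid]] .

lemma IP_zero: "\<zero> \<in> IP n"
  using additive_subgroup.zero_closed[OF ideal.axioms(1)[OF IPid]] .

lemma IP_mult: "r \<in> carrier R \<Longrightarrow> a \<in> IP n \<Longrightarrow> r \<otimes> a \<in> IP n"
  using ideal.I_l_closed[OF IPid] by blast

lemma IP_minus: "a \<in> IP n \<Longrightarrow> b \<in> IP n \<Longrightarrow> a \<ominus> b \<in> IP n"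
  unfolding a_minus_def using IP_add IP_neg by blast

lemma rep_carrier: "rep x \<Longrightarrow> x k \<in> carrier R"
  unfolding rep_def by blast

lemma rep_diff: "rep x \<Longrightarrow> x (Suc k) \<ominus> x k \<in> IP k"
  unfolding rep_def by blast

lemma repI: "(\<And>k. x k \<in> carrier R) \<Longrightarrow> (\<And>k. x (Suc k) \<ominus> x k \<in> IP k) \<Longrightarrow> rep x"
  unfolding rep_def by blast

lemma rep_add: "rep x \<Longrightarrow> rep y \<Longrightarrow> rep (\<lambda>k. x k \<oplus> y k)"
  by (rule repI) (auto simp: rep_carrier add_minus_add_R rep_diff intro!: IP_add)

lemma rep_const: "a \<in> carrier R \<Longrightarrow> rep (\<lambda>k. a)"
  by (rule repI) (auto simp: IP_zero a_minus_def R.r_neg)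

lemma rep_smult:
  assumes r: "r \<in> carrier R" and x: "rep x"
  shows "rep (\<lambda>k. r \<otimes> x k)"
proof (rule repI)
  show "r \<otimes> x k \<in> carrier R" for k using r rep_carrier[OF x] by simp
  fix k
  have "r \<otimes> x (Suc k) \<ominus> r \<otimes> x k = r \<otimes> (x (Suc k) \<ominus> x k)"
    using r rep_carrier[OF x] by (simp add: a_minus_def R.r_distr R.r_minus)
  then show "r \<otimes> x (Suc k) \<ominus> r \<otimes> x k \<in> IP k" using IP_mult[OF r rep_diff[OF x]] by simp
qed

lemma rep_minus:
  assumes x: "rep x" and y: "rep y"
  shows "rep (\<lambda>k. x k \<ominus> y k)"
proof (rule repI)
  show "x k \<ominus> y k \<in> carrier R" for k using rep_carrier[OF x] rep_carrier[OF y] by simp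
  fix k
  have "(x (Suc k) \<ominus> y (Suc k)) \<ominus> (x k \<ominus> y k) = (x (Suc k) \<ominus> x k) \<ominus> (y (Suc k) \<ominus> y k)"
    using rep_carrier[OF x] rep_carrier[OF y] by (simp add: a_minus_def R.minus_add R.a_ac)
  then show "(x (Suc k) \<ominus> y (Suc k)) \<ominus> (x k \<ominus> y k) \<in> IP k"
    using IP_minus[OF rep_diff[OF x] rep_diff[OF y]] by simp
qed

lemma rep_far: "rep x \<Longrightarrow> x (k + j) \<ominus> x k \<in> IP k"
proof (induction j)
  case 0 then show ?case using rep_carrier[OF 0] IP_zero by (simp add: a_minus_def R.r_neg)
next
  case (Suc j)
  have "x (k + Suc j) \<ominus> x k = (x (Suc (k + j)) \<ominus> x (k + j)) \<oplus> (x (k + j) \<ominus> x k)"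
    using minus_chain_R rep_carrier[OF Suc.prems] by simp
  moreover have "x (Suc (k + j)) \<ominus> x (k + j) \<in> IP k"
    using rep_diff[OF Suc.prems, of "k + j"] ideal_power_antimono[OF I, of k "k + j"] by auto
  ultimately show ?case using IP_add Suc by simp
qed

lemma hom_mem: "f \<in> module_Hom R H M \<Longrightarrow> c \<in> carrier H \<Longrightarrow> f c \<in> carrier M"
  unfolding module_Hom_def by auto

lemma hom_add: "f \<in> module_Hom R H M \<Longrightarrow> c \<in> carrier H \<Longrightarrow> d \<in> carrier H \<Longrightarrow> f (c \<oplus>\<^bsub>H\<^esub> d) = f c \<oplus>\<^bsub>M\<^esub> f d"
  unfolding module_Hom_def by auto

lemma hom_smult: "f \<in> module_Hom R H M \<Longrightarrow> r \<in> carrier R \<Longrightarrow> c \<in> carrier H \<Longrightarrow> f (r \<odot>\<^bsub>H\<^esub> c) = r \<odot>\<^bsub>M\<^esub> f c"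
  unfolding module_Hom_def by auto

lemma hom_elt_add:
  assumes f: "f \<in> module_Hom R H M" and x: "rep x" and y: "rep y"
  shows "f (elt (\<lambda>k. x k \<oplus> y k)) = f (elt x) \<oplus>\<^bsub>M\<^esub> f (elt y)"
  using hom_add[OF f elt_in[OF x] elt_in[OF y]] elt_add[OF rep_carrier[OF x] rep_carrier[OF y]] by simp

lemma hom_elt_smult:
  assumes f: "f \<in> module_Hom R H M" and r: "r \<in> carrier R" and x: "rep x"
  shows "f (elt (\<lambda>k. r \<otimes> x k)) = r \<odot>\<^bsub>M\<^esub> f (elt x)"
  using hom_smult[OF f r elt_in[OF x]] elt_smult[OF r rep_carrier[OF x]] by simp

lemma hom_elt_zero:
  assumes f: "f \<in> module_Hom R H M"
  shows "f (elt (\<lambda>k. \<zero>)) = \<zero>\<^bsub>M\<^esub>"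
proof -
  have z: "rep (\<lambda>k. \<zero>)" by (rule rep_const) simp
  have fz: "f (elt (\<lambda>k. \<zero>)) \<in> carrier M" by (rule hom_mem[OF f elt_in[OF z]])
  have "f (elt (\<lambda>k. \<zero>)) = f (elt (\<lambda>k. \<zero> \<oplus> \<zero>))" by simp
  also have "\<dots> = f (elt (\<lambda>k. \<zero>)) \<oplus>\<^bsub>M\<^esub> f (elt (\<lambda>k. \<zero>))" by (rule hom_elt_add[OF f z z])
  finally have "f (elt (\<lambda>k. \<zero>)) \<oplus>\<^bsub>M\<^esub> f (elt (\<lambda>k. \<zero>)) = f (elt (\<lambda>k. \<zero>)) \<oplus>\<^bsub>M\<^esub> \<zero>\<^bsub>M\<^esub>" using fz by simp
  then show ?thesis using fz by (simp add: M.add.l_cancel)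
qed

lemma hom_elt_cong:
  assumes "rep x" "rep y" "\<And>k. x k = y k"
  shows "elt x = elt y"
  using assms by (metis ext)

end


lemma (in cring) add_minus_left_R:
  assumes "a \<in> carrier R" "b \<in> carrier R"
  shows "(a \<oplus> b) \<ominus> a = b"
  using assms by (metis a_comm a_assoc r_neg r_zero add.inv_closed a_minus_def)

lemma (in cring) lcomb_zero: "finite G \<Longrightarrow> G \<subseteq> carrier R \<Longrightarrow> lcomb G (\<lambda>g. \<zero>) = \<zero>"
proof -
  assume G: "finite G" "G \<subseteq> carrier R"
  have "lcomb G (\<lambda>g. \<zero>) = (\<Oplus>g\<in>G. \<zero>)" unfolding lcomb_def by (rule finsum_cong') (use G in auto)
  then show ?thesis by simp
qed

lemma (in cring) lcomb_insert:
  assumes "finite G" "insert g G \<subseteq> carrier R" "g \<notin> G" "\<And>h. h \<in> insert g G \<Longrightarrow> w h \<in> carrier R"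
  shows "lcomb (insert g G) w = g \<otimes> w g \<oplus> lcomb G w"
  unfolding lcomb_def by (rule finsum_insert) (use assms in auto)

lemma (in cring) lcomb_empty: "lcomb {} w = \<zero>"
  unfolding lcomb_def by simp

context setting begin

lemma key:
  assumes f: "f \<in> module_Hom R H M" and x: "rep x" and xn: "x n \<in> IP n"
  shows "f (elt x) \<in> Kp (f ` carrier H) n"
proof -
  define N where "N = f ` carrier H"
  have NM: "N \<subseteq> carrier M" unfolding N_def using hom_mem[OF f] by auto
  have KN: "submodule (Kp N n) R M" by (rule Kp_sub[OF NM])
  note KNc = submoduleD[OF KN]
  have inN: "f (elt y) \<in> N" if "rep y" for y using elt_in[OF that] unfolding N_def by blast
  obtain G where G: "G \<subseteq> carrier R" "finite G" "IP n = Idl G" using finetely_gen[OF IPid[of n]] by auto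
  have GI: "G \<subseteq> IP n" using genideal_self[OF G(1)] G(3) by simp
  have "\<forall>j. \<exists>y. (\<forall>g\<in>G. y g \<in> IP j) \<and> x (n + Suc j) \<ominus> x (n + j) = lcomb G y"
  proof
    fix j
    have "x (Suc (n + j)) \<ominus> x (n + j) \<in> IP (n + j)" by (rule rep_diff[OF x])
    then have "x (Suc (n + j)) \<ominus> x (n + j) \<in> ideal_prod R (Idl G) (IP j)" using ideal_power_add[OF I, of n j] G(3) by simp
    then show "\<exists>y. (\<forall>g\<in>G. y g \<in> IP j) \<and> x (n + Suc j) \<ominus> x (n + j) = lcomb G y"
      using ideal_prod_lcomb[OF G(2) G(1) IPid] by simp
  qed
  then obtain Y where Y: "\<And>j g. g \<in> G \<Longrightarrow> Y j g \<in> IP j" "\<And>j. x (n + Suc j) \<ominus> x (n + j) = lcomb G (Y j)"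
    by metis
  define W where "W = (\<lambda>g. rec_nat \<zero> (\<lambda>k w. w \<oplus> Y k g))"
  have W0: "W g 0 = \<zero>" and WS: "W g (Suc k) = W g k \<oplus> Y k g" for g k unfolding W_def by simp_all
  have YR: "Y j g \<in> carrier R" if "g \<in> G" for j g using Y(1)[OF that] IP_R by blast
  have WR: "W g k \<in> carrier R" if g: "g \<in> G" for g k by (induction k) (simp_all add: W0 WS YR[OF g])
  have Wrep: "rep (W g)" if g: "g \<in> G" for g
  proof (rule repI)
    show "W g k \<in> carrier R" for k by (rule WR[OF g])
    show "W g (Suc k) \<ominus> W g k \<in> IP k" for k unfolding WS using add_minus_left_R[OF WR[OF g] YR[OF g]] Y(1)[OF g] by simp
  qed
  have xR: "x k \<in> carrier R" for k by (rule rep_carrier[OF x])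
  have S: "lcomb G (\<lambda>g. W g k) = x (n + k) \<ominus> x n" for k
  proof (induction k)
    case 0 then show ?case using lcomb_zero[OF G(2,1)] xR by (simp add: W0 a_minus_def R.r_neg)
  next
    case (Suc k)
    have "lcomb G (\<lambda>g. W g (Suc k)) = lcomb G (\<lambda>g. W g k \<oplus> Y k g)" unfolding WS by simp
    also have "\<dots> = lcomb G (\<lambda>g. W g k) \<oplus> lcomb G (Y k)"
      by (rule lcomb_add[symmetric, OF G(2,1)]) (use WR YR in auto)
    also have "\<dots> = (x (n + k) \<ominus> x n) \<oplus> (x (n + Suc k) \<ominus> x (n + k))" using Suc Y(2) by simp
    also have "\<dots> = (x (n + Suc k) \<ominus> x (n + k)) \<oplus> (x (n + k) \<ominus> x n)" using xR by (simp add: R.a_comm)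
    also have "\<dots> = x (n + Suc k) \<ominus> x n" by (rule minus_chain_R[OF xR xR xR])
    finally show ?case .
  qed
  have L: "rep (\<lambda>k. lcomb G' (\<lambda>g. W g k)) \<and> f (elt (\<lambda>k. lcomb G' (\<lambda>g. W g k))) \<in> Kp N n" if G': "G' \<subseteq> G" for G'
  proof -
    have "finite G'" using finite_subset[OF G' G(2)] .
    then show ?thesis using G'
    proof (induction G' rule: finite_induct)
      case empty
      have r0: "rep (\<lambda>k. \<zero>)" by (rule rep_const) simp
      show ?case using r0 hom_elt_zero[OF f] KNc(2) by (simp add: lcomb_empty)
    next
      case (insert g G')
      have g: "g \<in> G" and GG: "G' \<subseteq> G" using insert.prems by auto
      have eq: "(\<lambda>k. lcomb (insert g G') (\<lambda>g. W g k)) = (\<lambda>k. g \<otimes> W g k \<oplus> lcomb G' (\<lambda>g. W g k))"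
      proof
        fix k show "lcomb (insert g G') (\<lambda>g. W g k) = g \<otimes> W g k \<oplus> lcomb G' (\<lambda>g. W g k)"
          by (rule lcomb_insert[OF insert.hyps(1) _ insert.hyps(2)]) (use insert.prems G(1) WR in auto)
      qed
      have IH: "rep (\<lambda>k. lcomb G' (\<lambda>g. W g k))" "f (elt (\<lambda>k. lcomb G' (\<lambda>g. W g k))) \<in> Kp N n"
        using insert.IH[OF GG] by auto
      have gR: "g \<in> carrier R" using g G(1) by auto
      have r1: "rep (\<lambda>k. g \<otimes> W g k)" by (rule rep_smult[OF gR Wrep[OF g]])
      have "rep (\<lambda>k. g \<otimes> W g k \<oplus> lcomb G' (\<lambda>g. W g k))" by (rule rep_add[OF r1 IH(1)])
      moreover have "f (elt (\<lambda>k. g \<otimes> W g k \<oplus> lcomb G' (\<lambda>g. W g k))) = g \<odot>\<^bsub>M\<^esub> f (elt (W g)) \<oplus>\<^bsub>M\<^esub> f (elt (\<lambda>k. lcomb G' (\<lambda>g. W g k)))"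
        using hom_elt_add[OF f r1 IH(1)] hom_elt_smult[OF f gR Wrep[OF g]] by simp
      moreover have "g \<odot>\<^bsub>M\<^esub> f (elt (W g)) \<in> Kp N n" by (rule Kp_gen[OF _ inN[OF Wrep[OF g]]]) (use g GI in auto)
      ultimately show ?case using eq IH(2) KNc(3) by auto
    qed
  qed
  define z where "z = (\<lambda>k. x n \<otimes> \<one> \<oplus> lcomb G (\<lambda>g. W g k))"
  have zk: "z k = x (n + k)" for k
  proof -
    have "z k = x n \<oplus> (x (n + k) \<ominus> x n)" unfolding z_def S using xR by simp
    also have "\<dots> = x (n + k)" using xR by (simp add: a_minus_def R.a_comm) (simp add: R.a_assoc[symmetric] R.r_neg)
    finally show ?thesis .
  qed
  have Lz: "rep (\<lambda>k. lcomb G (\<lambda>g. W g k))" "f (elt (\<lambda>k. lcomb G (\<lambda>g. W g k))) \<in> Kp N n" using L by auto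
  have r1: "rep (\<lambda>k. x n \<otimes> \<one>)" by (rule rep_smult[OF xR rep_const]) simp
  have zrep: "rep z" unfolding z_def by (rule rep_add[OF r1 Lz(1)])
  have "elt x = elt z"
  proof -
    have "x k \<ominus> z k \<in> IP k" for k
    proof -
      have "x (k + n) \<ominus> x k \<in> IP k" by (rule rep_far[OF x])
      then have "\<ominus> (x (k + n) \<ominus> x k) \<in> IP k" by (rule IP_neg)
      moreover have "\<ominus> (x (k + n) \<ominus> x k) = x k \<ominus> x (n + k)" using xR
        by (simp add: a_minus_def R.minus_add R.a_comm add.commute)
      ultimately show ?thesis using zk by simp
    qed
    then show ?thesis using elt_eq[OF rep_carrier[OF x] rep_carrier[OF zrep]] by simp
  qed
  then have "f (elt x) = f (elt (\<lambda>k. x n \<otimes> \<one>)) \<oplus>\<^bsub>M\<^esub> f (elt (\<lambda>k. lcomb G (\<lambda>g. W g k)))"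
    using hom_elt_add[OF f r1 Lz(1)] unfolding z_def by simp
  moreover have "f (elt (\<lambda>k. x n \<otimes> \<one>)) = x n \<odot>\<^bsub>M\<^esub> f (elt (\<lambda>k. \<one>))"
    by (rule hom_elt_smult[OF f xR rep_const]) simp
  moreover have "x n \<odot>\<^bsub>M\<^esub> f (elt (\<lambda>k. \<one>)) \<in> Kp N n" by (rule Kp_gen[OF xn inN[OF rep_const]]) simp
  ultimately show ?thesis using Lz(2) KNc(3) unfolding N_def by auto
qed

end

lemma (in cring) add_minus_swap_R:
  assumes "a \<in> carrier R" "b \<in> carrier R" "c \<in> carrier R"
  shows "(a \<oplus> b) \<ominus> c = (a \<ominus> c) \<oplus> b"
  using assms by (simp add: a_minus_def a_ac)

lemma (in cring) add_minus_cancel_R: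
  assumes "a \<in> carrier R" "b \<in> carrier R"
  shows "a \<oplus> (b \<ominus> a) = b"
proof -
  have "a \<oplus> (b \<ominus> a) = (b \<ominus> a) \<oplus> a" by (rule a_comm) (use assms in simp_all)
  also have "\<dots> = b \<oplus> (\<ominus> a \<oplus> a)" using assms by (simp add: a_minus_def a_assoc)
  also have "\<dots> = b" using assms by (simp add: l_neg)
  finally show ?thesis .
qed

context setting begin

lemma image_submodule:
  assumes f: "f \<in> module_Hom R H M"
  shows "submodule (f ` carrier H) R M"
proof (rule submoduleI2)
  show "f ` carrier H \<subseteq> carrier M" using hom_mem[OF f] by auto
  have r0: "rep (\<lambda>k. \<zero>)" by (rule rep_const) simp
  show "\<zero>\<^bsub>M\<^esub> \<in> f ` carrier H" using hom_elt_zero[OF f] elt_in[OF r0] by (metis image_eqI)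
  fix u v assume "u \<in> f ` carrier H"
  then obtain x where x: "rep x" "u = f (elt x)" using elt_surj by blast
  { assume "v \<in> f ` carrier H"
    then obtain y where y: "rep y" "v = f (elt y)" using elt_surj by blast
    have "u \<oplus>\<^bsub>M\<^esub> v = f (elt (\<lambda>k. x k \<oplus> y k))" using hom_elt_add[OF f x(1) y(1)] x y by simp
    then show "u \<oplus>\<^bsub>M\<^esub> v \<in> f ` carrier H" using elt_in[OF rep_add[OF x(1) y(1)]] by simp }
  fix r assume r: "r \<in> carrier R"
  have "r \<odot>\<^bsub>M\<^esub> u = f (elt (\<lambda>k. r \<otimes> x k))" using hom_elt_smult[OF f r x(1)] x by simp
  then show "r \<odot>\<^bsub>M\<^esub> u \<in> f ` carrier H" using elt_in[OF rep_smult[OF r x(1)]] by simp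
qed

lemma Kp_image:
  assumes f: "f \<in> module_Hom R H M"
  shows "Kp (f ` carrier H) m \<subseteq> {f (elt x) | x. rep x \<and> x m \<in> IP m}"
proof (rule ism_min)
  show "submodule {f (elt x) | x. rep x \<and> x m \<in> IP m} R M"
  proof (rule submoduleI2)
    show "{f (elt x) | x. rep x \<and> x m \<in> IP m} \<subseteq> carrier M" using hom_mem[OF f elt_in] by auto
    have r0: "rep (\<lambda>k. \<zero>)" by (rule rep_const) simp
    show "\<zero>\<^bsub>M\<^esub> \<in> {f (elt x) | x. rep x \<and> x m \<in> IP m}"
      using hom_elt_zero[OF f] r0 IP_zero by (intro CollectI exI[of _ "\<lambda>k. \<zero>"]) auto
    fix u v assume "u \<in> {f (elt x) | x. rep x \<and> x m \<in> IP m}"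
    then obtain x where x: "rep x" "x m \<in> IP m" "u = f (elt x)" by blast
    { assume "v \<in> {f (elt x) | x. rep x \<and> x m \<in> IP m}"
      then obtain y where y: "rep y" "y m \<in> IP m" "v = f (elt y)" by blast
      have "u \<oplus>\<^bsub>M\<^esub> v = f (elt (\<lambda>k. x k \<oplus> y k))" using hom_elt_add[OF f x(1) y(1)] x y by simp
      then show "u \<oplus>\<^bsub>M\<^esub> v \<in> {f (elt x) | x. rep x \<and> x m \<in> IP m}"
        using rep_add[OF x(1) y(1)] IP_add[OF x(2) y(2)] by (intro CollectI exI[of _ "\<lambda>k. x k \<oplus> y k"]) auto }
    fix r assume r: "r \<in> carrier R"
    have "r \<odot>\<^bsub>M\<^esub> u = f (elt (\<lambda>k. r \<otimes> x k))" using hom_elt_smult[OF f r x(1)] x by simp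
    then show "r \<odot>\<^bsub>M\<^esub> u \<in> {f (elt x) | x. rep x \<and> x m \<in> IP m}"
      using rep_smult[OF r x(1)] IP_mult[OF r x(2)] by (intro CollectI exI[of _ "\<lambda>k. r \<otimes> x k"]) auto
  qed
  fix r u assume r: "r \<in> IP m" and u: "u \<in> f ` carrier H"
  then obtain x where x: "rep x" "u = f (elt x)" using elt_surj by blast
  have rR: "r \<in> carrier R" using r IP_R by auto
  have "r \<odot>\<^bsub>M\<^esub> u = f (elt (\<lambda>k. r \<otimes> x k))" using hom_elt_smult[OF f rR x(1)] x by simp
  moreover have "r \<otimes> x m \<in> IP m" using ideal.I_r_closed[OF IPid r rep_carrier[OF x(1)]] .
  ultimately show "r \<odot>\<^bsub>M\<^esub> u \<in> {f (elt x) | x. rep x \<and> x m \<in> IP m}"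
    using rep_smult[OF rR x(1)] by (intro CollectI exI[of _ "\<lambda>k. r \<otimes> x k"]) auto
qed

lemma image_surj_lim:
  assumes f: "f \<in> module_Hom R H M"
  shows "surj_lim (f ` carrier H)"
  unfolding surj_lim_def
proof (intro allI impI)
  define N where "N = f ` carrier H"
  fix s assume s: "(\<forall>n. s n \<in> f ` carrier H) \<and> (\<forall>n. s (Suc n) \<ominus>\<^bsub>M\<^esub> s n \<in> Kp (f ` carrier H) n)"
  have "\<forall>m. \<exists>d. rep d \<and> d m \<in> IP m \<and> s (Suc m) \<ominus>\<^bsub>M\<^esub> s m = f (elt d)"
    using s Kp_image[OF f] by blast
  then obtain d where d: "\<And>m. rep (d m)" "\<And>m. d m m \<in> IP m" "\<And>m. s (Suc m) \<ominus>\<^bsub>M\<^esub> s m = f (elt (d m))"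
    by metis
  obtain e where e: "rep e" "s 0 = f (elt e)" using s elt_surj by blast
  define PS where "PS = (\<lambda>m k. rec_nat (e k) (\<lambda>j p. p \<oplus> d j k) m)"
  have PS0: "PS 0 k = e k" and PSS: "PS (Suc m) k = PS m k \<oplus> d m k" for m k unfolding PS_def by simp_all
  have PSrep: "rep (PS m)" for m
  proof (induction m)
    case 0 then show ?case using e(1) by (simp add: PS0[abs_def])
  next
    case (Suc m)
    have "rep (\<lambda>k. PS m k \<oplus> d m k)" by (rule rep_add[OF Suc d(1)])
    then show ?case by (simp add: PSS[abs_def])
  qed
  have sM: "s m \<in> carrier M" for m
  proof -
    obtain c where "c \<in> carrier H" "s m = f c" using s by blast
    then show ?thesis using hom_mem[OF f] by simp
  qed
  have PSs: "f (elt (PS m)) = s m" for m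
  proof (induction m)
    case 0 then show ?case using e(2) by (simp add: PS0[abs_def])
  next
    case (Suc m)
    have "f (elt (PS (Suc m))) = f (elt (\<lambda>k. PS m k \<oplus> d m k))" by (simp add: PSS[abs_def])
    also have "\<dots> = f (elt (PS m)) \<oplus>\<^bsub>M\<^esub> f (elt (d m))" by (rule hom_elt_add[OF f PSrep d(1)])
    also have "\<dots> = s m \<oplus>\<^bsub>M\<^esub> (s (Suc m) \<ominus>\<^bsub>M\<^esub> s m)" using Suc d(3) by simp
    also have "\<dots> = s (Suc m)" using sM by (metis M.add.m_comm minus_cancel_lin M.minus_closed)
    finally show ?case .
  qed
  define T where "T = (\<lambda>k. PS k k)"
  have Trep: "rep T"
  proof (rule repI)
    show "T k \<in> carrier R" for k unfolding T_def using rep_carrier[OF PSrep] .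
    fix k
    have c: "PS k (Suc k) \<in> carrier R" "PS k k \<in> carrier R" "d k (Suc k) \<in> carrier R" "d k k \<in> carrier R"
      using rep_carrier[OF PSrep] rep_carrier[OF d(1)] by auto
    have "T (Suc k) \<ominus> T k = (PS k (Suc k) \<ominus> PS k k) \<oplus> d k (Suc k)"
      unfolding T_def PSS by (rule add_minus_swap_R[OF c(1,3,2)])
    moreover have "d k (Suc k) \<in> IP k"
    proof -
      have "d k (Suc k) = d k k \<oplus> (d k (Suc k) \<ominus> d k k)" using add_minus_cancel_R[OF c(4,3)] by simp
      then show ?thesis using IP_add[OF d(2) rep_diff[OF d(1)]] by metis
    qed
    ultimately show "T (Suc k) \<ominus> T k \<in> IP k" using IP_add[OF rep_diff[OF PSrep]] by simp
  qed
  have "f (elt T) \<in> f ` carrier H" using elt_in[OF Trep] by simp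
  moreover have "f (elt T) \<ominus>\<^bsub>M\<^esub> s m \<in> Kp (f ` carrier H) m" for m
  proof -
    define D where "D = (\<lambda>k. T k \<ominus> PS m k)"
    have Drep: "rep D" unfolding D_def by (rule rep_minus[OF Trep PSrep])
    have "D m = \<zero>" unfolding D_def T_def using rep_carrier[OF PSrep] by (simp add: a_minus_def R.r_neg)
    then have Dm: "D m \<in> IP m" using IP_zero by simp
    have "elt T = elt (\<lambda>k. PS m k \<oplus> D k)"
    proof -
      have "(\<lambda>k. PS m k \<oplus> D k) = T" unfolding D_def
        using add_minus_cancel_R[OF rep_carrier[OF PSrep] rep_carrier[OF Trep]] by simp
      then show ?thesis by simp
    qed
    then have "f (elt T) = s m \<oplus>\<^bsub>M\<^esub> f (elt D)" using hom_elt_add[OF f PSrep Drep] PSs by simp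
    then have "f (elt T) \<ominus>\<^bsub>M\<^esub> s m = f (elt D)"
      using add_minus_left[OF sM hom_mem[OF f elt_in[OF Drep]]] by simp
    then show ?thesis using key[OF f Drep Dm] by simp
  qed
  ultimately show "\<exists>x\<in>f ` carrier H. \<forall>n. x \<ominus>\<^bsub>M\<^esub> s n \<in> Kp (f ` carrier H) n" by blast
qed

lemma hom_into_C:
  assumes f: "f \<in> module_Hom R H M"
  shows "f ` carrier H \<subseteq> max_complete_submodule R M I"
  by (rule C_props(3)[OF image_submodule[OF f] image_surj_lim[OF f]])

end

theorem lemma1p2:
  fixes R :: "'a ring" and I :: "'a set" and M :: "('a, 'm) module"
  assumes "cring R" and "noetherian_ring R"
    and "ideal I R" and "I \<subseteq> jacobson_radical R"
    and "module R M" and "fin_gen_module R M"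
  shows "bij_betw (\<lambda>f. compose (carrier (ring_completion R I)) (\<lambda>y. y) f)
           (module_Hom R (ring_completion R I)
              (M\<lparr>carrier := max_complete_submodule R M I\<rparr>))
           (module_Hom R (ring_completion R I) M)"
proof -
  interpret S: setting R M I
    using assms unfolding setting_def setting_axioms_def nfgmod_def nfgmod_axioms_def nfmod_def fmod_def
    by auto
  let ?H = "ring_completion R I"
  let ?C = "max_complete_submodule R M I"
  have CM: "?C \<subseteq> carrier M" using S.submoduleD(1)[OF S.C_props(1)] .
  have eq: "module_Hom R ?H (M\<lparr>carrier := ?C\<rparr>) = module_Hom R ?H M"
  proof
    show "module_Hom R ?H (M\<lparr>carrier := ?C\<rparr>) \<subseteq> module_Hom R ?H M"
      unfolding module_Hom_def using CM by (auto simp: PiE_def Pi_def)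
    show "module_Hom R ?H M \<subseteq> module_Hom R ?H (M\<lparr>carrier := ?C\<rparr>)"
    proof
      fix f assume f: "f \<in> module_Hom R ?H M"
      have "f ` carrier ?H \<subseteq> ?C" by (rule S.hom_into_C[OF f])
      then show "f \<in> module_Hom R ?H (M\<lparr>carrier := ?C\<rparr>)" using f unfolding module_Hom_def
        by (auto simp: PiE_def Pi_def)
    qed
  qed
  have id: "compose (carrier ?H) (\<lambda>y. y) f = f" if "f \<in> module_Hom R ?H (M\<lparr>carrier := ?C\<rparr>)" for f
  proof -
    have ext: "f \<in> extensional (carrier ?H)" using that unfolding module_Hom_def PiE_def by blast
    have "compose (carrier ?H) (\<lambda>y. y) f = restrict f (carrier ?H)" unfolding compose_def by simp
    also have "\<dots> = f" by (rule extensional_restrict[OF ext])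
    finally show ?thesis .
  qed
  have "bij_betw (\<lambda>f. compose (carrier ?H) (\<lambda>y. y) f) (module_Hom R ?H (M\<lparr>carrier := ?C\<rparr>)) (module_Hom R ?H (M\<lparr>carrier := ?C\<rparr>))
      = bij_betw (\<lambda>f. f) (module_Hom R ?H (M\<lparr>carrier := ?C\<rparr>)) (module_Hom R ?H (M\<lparr>carrier := ?C\<rparr>))"
    by (rule bij_betw_cong) (rule id)
  moreover have "bij_betw (\<lambda>f. f) (module_Hom R ?H (M\<lparr>carrier := ?C\<rparr>)) (module_Hom R ?H (M\<lparr>carrier := ?C\<rparr>))"
    unfolding bij_betw_def inj_on_def by simp
  ultimately show ?thesis using eq by simp
qed

end
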